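(* Let $\mathbb{S}=[0,1]$ with $0$ and $1$ identified, and let $H:\mathbb{S}\times\mathbb{R}\times\mathbb{R}\to\mathbb{R}$ be $C^\infty$ with $\frac{\partial^2H}{\partial p^2}>0$, $p\mapsto H(x,p,u)$ superlinear for each $(x,u)$, and $|\frac{\partial H}{\partial u}|\le\kappa$ for some $\kappa>0$. Let $u_0$ be a viscosity solution of $H(x,u'(x),u(x))=0$ on $\mathbb{S}$ such that $\frac{\partial H}{\partial p}(x,u_0'(x),u_0(x))\ne0$ at every differentiability point $x$ of $u_0$. Set $B(x)=\frac{\partial H}{\partial p}(x,u_0'(x),u_0(x))$, $$\mu=\frac{\int_0^1\frac{\partial H}{\partial u}(\tau,u_0'(\tau),u_0(\tau))B(\tau)^{-1}d\tau}{\int_0^1B(\tau)^{-1}d\tau},\qquad \rho(x)=\exp\left\{\int_0^x\frac{\mu-\frac{\partial H}{\partial u}(\tau,u_0'(\tau),u_0(\tau))}{B(\tau)}\,d\tau\right\},$$ $Z=-\int_0^1B(\tau)^{-1}d\tau$, $\mathcal{T}=|Z|$, and $f(x)=\frac{2\pi}{Z}\int_0^x\left(-B(\tau)^{-1}\right)d\tau$. Assume $\mu<0$. Fix $x_0\in\mathbb{S}$ and for $\epsilon>0$ define $$w(x,t)=u_0(x)+\epsilon\rho(x)+\epsilon\rho(x)\sin\!\Big(-\frac{\pi}{2}+f(x)-f(x_0)+\frac{2\pi}{Z}t\Big),\quad (x,t)\in\mathbb{S}\times[0,+\infty).$$ Then there exists $\tilde\epsilon_1>0$ such that for every $\epsilon\in(0,\tilde\epsilon_1]$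 and all $(x,t)\in\mathbb{S}\times[0,+\infty)$, $$w(x,t+\mathcal{T})=w(x,t)\quad\text{and}\quad \partial_tw(x,t)+H(x,\partial_xw(x,t),w(x,t))\le0.$$
   Context: It is known that under these assumptions $u_0$ is of class $C^\infty$, so $B$ is smooth and nowhere zero, and $\rho$ is a smooth positive function on $\mathbb{S}$. *)

theory Defs
  imports "HOL-Analysis.Analysis"
begin

text \<open>The circle S = [0,1] with 0 and 1 identified is modelled by 1-periodic
functions on the real line.  H x p u is written curried.\<close>

definition Hx :: "(real \<Rightarrow> real \<Rightarrow> real \<Rightarrow> real) \<Rightarrow> real \<Rightarrow> real \<Rightarrow> real \<Rightarrow> real" where
  "Hx H x p u = deriv (\<lambda>y. H y p u) x"
definition Hp :: "(real \<Rightarrow> real \<Rightarrow> real \<Rightarrow> real) \<Rightarrow> real \<Rightarrow> real \<Rightarrow> real \<Rightarrow> real" where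
  "Hp H x p u = deriv (\<lambda>q. H x q u) p"
definition Hu :: "(real \<Rightarrow> real \<Rightarrow> real \<Rightarrow> real) \<Rightarrow> real \<Rightarrow> real \<Rightarrow> real \<Rightarrow> real" where
  "Hu H x p u = deriv (\<lambda>v. H x p v) u"

fun Ck :: "nat \<Rightarrow> (real \<Rightarrow> real \<Rightarrow> real \<Rightarrow> real) \<Rightarrow> bool" where
  "Ck 0 F = continuous_on UNIV (\<lambda>(x, p, u). F x p u)"
| "Ck (Suc k) F = ((\<forall>x p u. (\<lambda>(y, q, v). F y q v) differentiable (at (x, p, u)))
      \<and> Ck k (Hx F) \<and> Ck k (Hp F) \<and> Ck k (Hu F))"

definition smooth3 :: "(real \<Rightarrow> real \<Rightarrow> real \<Rightarrow> real) \<Rightarrow> bool" where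
  "smooth3 F \<longleftrightarrow> (\<forall>k. Ck k F)"

definition viscosity_subsolution :: "(real \<Rightarrow> real \<Rightarrow> real \<Rightarrow> real) \<Rightarrow> (real \<Rightarrow> real) \<Rightarrow> bool" where
  "viscosity_subsolution H v \<longleftrightarrow> continuous_on UNIV v \<and>
     (\<forall>\<phi> x. \<phi> C1_differentiable_on UNIV \<longrightarrow>
        (\<exists>e>0. \<forall>y. \<bar>y - x\<bar> < e \<longrightarrow> v y - \<phi> y \<le> v x - \<phi> x) \<longrightarrow>
        H x (deriv \<phi> x) (v x) \<le> 0)"

definition viscosity_supersolution :: "(real \<Rightarrow> real \<Rightarrow> real \<Rightarrow> real) \<Rightarrow> (real \<Rightarrow> real) \<Rightarrow> bool" where
  "viscosity_supersolution H v \<longleftrightarrow> continuous_on UNIV v \<and>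
     (\<forall>\<phi> x. \<phi> C1_differentiable_on UNIV \<longrightarrow>
        (\<exists>e>0. \<forall>y. \<bar>y - x\<bar> < e \<longrightarrow> v y - \<phi> y \<ge> v x - \<phi> x) \<longrightarrow>
        H x (deriv \<phi> x) (v x) \<ge> 0)"

definition viscosity_solution :: "(real \<Rightarrow> real \<Rightarrow> real \<Rightarrow> real) \<Rightarrow> (real \<Rightarrow> real) \<Rightarrow> bool" where
  "viscosity_solution H v \<longleftrightarrow> viscosity_subsolution H v \<and> viscosity_supersolution H v"

definition oint :: "real \<Rightarrow> real \<Rightarrow> (real \<Rightarrow> real) \<Rightarrow> real" where
  "oint a b g = (if a \<le> b then integral {a..b} g else - integral {b..a} g)"

definition Bf :: "(real \<Rightarrow> real \<Rightarrow> real \<Rightarrow> real) \<Rightarrow> (real \<Rightarrow> real) \<Rightarrow> real \<Rightarrow> real" where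
  "Bf H u0 x = Hp H x (deriv u0 x) (u0 x)"

definition muC :: "(real \<Rightarrow> real \<Rightarrow> real \<Rightarrow> real) \<Rightarrow> (real \<Rightarrow> real) \<Rightarrow> real" where
  "muC H u0 = integral {0..1} (\<lambda>\<tau>. Hu H \<tau> (deriv u0 \<tau>) (u0 \<tau>) / Bf H u0 \<tau>)
              / integral {0..1} (\<lambda>\<tau>. 1 / Bf H u0 \<tau>)"

definition rhoF :: "(real \<Rightarrow> real \<Rightarrow> real \<Rightarrow> real) \<Rightarrow> (real \<Rightarrow> real) \<Rightarrow> real \<Rightarrow> real" where
  "rhoF H u0 x = exp (oint 0 x (\<lambda>\<tau>. (muC H u0 - Hu H \<tau> (deriv u0 \<tau>) (u0 \<tau>)) / Bf H u0 \<tau>))"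

definition ZC :: "(real \<Rightarrow> real \<Rightarrow> real \<Rightarrow> real) \<Rightarrow> (real \<Rightarrow> real) \<Rightarrow> real" where
  "ZC H u0 = - integral {0..1} (\<lambda>\<tau>. 1 / Bf H u0 \<tau>)"

definition TC :: "(real \<Rightarrow> real \<Rightarrow> real \<Rightarrow> real) \<Rightarrow> (real \<Rightarrow> real) \<Rightarrow> real" where
  "TC H u0 = \<bar>ZC H u0\<bar>"

definition fF :: "(real \<Rightarrow> real \<Rightarrow> real \<Rightarrow> real) \<Rightarrow> (real \<Rightarrow> real) \<Rightarrow> real \<Rightarrow> real" where
  "fF H u0 x = 2 * pi / ZC H u0 * oint 0 x (\<lambda>\<tau>. - (1 / Bf H u0 \<tau>))"

definition wF :: "(real \<Rightarrow> real \<Rightarrow> real \<Rightarrow> real) \<Rightarrow> (real \<Rightarrow> real) \<Rightarrow> real \<Rightarrow> real \<Rightarrow> real \<Rightarrow> real \<Rightarrow> real" where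
  "wF H u0 x0 \<epsilon> x t = u0 x + \<epsilon> * rhoF H u0 x
     + \<epsilon> * rhoF H u0 x * sin (- pi / 2 + fF H u0 x - fF H u0 x0 + 2 * pi / ZC H u0 * t)"

end

theory Submission
  imports Defs
begin


lemma diff3_p:
  fixes F :: "real \<Rightarrow> real \<Rightarrow> real \<Rightarrow> real"
  assumes "\<forall>x p u. (\<lambda>(y, q, v). F y q v) differentiable (at (x, p, u))"
  shows "((\<lambda>q. F x q v) has_real_derivative Hp F x q v) (at q)"
proof -
  have "(\<lambda>q. (\<lambda>(y, q, v). F y q v) (x, q, v)) differentiable (at q)"
    by (rule differentiable_compose[of "\<lambda>(y, q, v). F y q v"]) (use assms in auto)
  then have "(\<lambda>q. F x q v) differentiable (at q)" by simp
  then show ?thesis unfolding Hp_def using DERIV_deriv_iff_real_differentiable by blast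
qed

lemma diff3_u:
  fixes F :: "real \<Rightarrow> real \<Rightarrow> real \<Rightarrow> real"
  assumes "\<forall>x p u. (\<lambda>(y, q, v). F y q v) differentiable (at (x, p, u))"
  shows "((\<lambda>v. F x q v) has_real_derivative Hu F x q v) (at v)"
proof -
  have "(\<lambda>v. (\<lambda>(y, q, v). F y q v) (x, q, v)) differentiable (at v)"
    by (rule differentiable_compose[of "\<lambda>(y, q, v). F y q v"]) (use assms in auto)
  then have "(\<lambda>v. F x q v) differentiable (at v)" by simp
  then show ?thesis unfolding Hu_def using DERIV_deriv_iff_real_differentiable by blast
qed

lemma cont3:
  fixes F :: "real \<Rightarrow> real \<Rightarrow> real \<Rightarrow> real"
  assumes "continuous_on UNIV (\<lambda>(x, p, u). F x p u)"
    and "continuous_on S a" "continuous_on S b" "continuous_on S c"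
  shows "continuous_on S (\<lambda>z. F (a z) (b z) (c z))"
proof -
  have "continuous_on S (\<lambda>z. (a z, b z, c z))"
    using assms by (intro continuous_intros)
  then have "continuous_on S ((\<lambda>(x, p, u). F x p u) \<circ> (\<lambda>z. (a z, b z, c z)))"
    by (rule continuous_on_compose) (rule continuous_on_subset[OF assms(1)], simp)
  then show ?thesis by (simp add: o_def)
qed

lemma cont3_tendsto:
  fixes F :: "real \<Rightarrow> real \<Rightarrow> real \<Rightarrow> real"
  assumes "continuous_on UNIV (\<lambda>(x, p, u). F x p u)"
    and "(a \<longlongrightarrow> a0) G" "(b \<longlongrightarrow> b0) G" "(c \<longlongrightarrow> c0) G"
  shows "((\<lambda>z. F (a z) (b z) (c z)) \<longlongrightarrow> F a0 b0 c0) G"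
proof -
  have ic: "isCont (\<lambda>(x, p, u). F x p u) (a0, b0, c0)"
    using assms(1) continuous_on_eq_continuous_at by blast
  have "((\<lambda>z. (a z, b z, c z)) \<longlongrightarrow> (a0, b0, c0)) G"
    using assms by (intro tendsto_intros)
  from isCont_tendsto_compose[OF ic this] show ?thesis by simp
qed

lemma smooth3_facts:
  assumes "smooth3 H"
  shows "continuous_on UNIV (\<lambda>(x, p, u). H x p u)"
    "continuous_on UNIV (\<lambda>(x, p, u). Hp H x p u)"
    "continuous_on UNIV (\<lambda>(x, p, u). Hu H x p u)"
    "continuous_on UNIV (\<lambda>(x, p, u). Hp (Hp H) x p u)"
    "continuous_on UNIV (\<lambda>(x, p, u). Hu (Hp H) x p u)"
    "continuous_on UNIV (\<lambda>(x, p, u). Hu (Hu H) x p u)"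
    "((\<lambda>q. H x q v) has_real_derivative Hp H x q v) (at q)"
    "((\<lambda>v. H x q v) has_real_derivative Hu H x q v) (at v)"
    "((\<lambda>q. Hp H x q v) has_real_derivative Hp (Hp H) x q v) (at q)"
    "((\<lambda>v. Hp H x q v) has_real_derivative Hu (Hp H) x q v) (at v)"
    "((\<lambda>v. Hu H x q v) has_real_derivative Hu (Hu H) x q v) (at v)"
proof -
  have c0: "Ck 0 H" and c1: "Ck 1 H" and c2: "Ck 2 H" using assms unfolding smooth3_def by auto
  have c2': "Ck (Suc (Suc 0)) H" using c2 by (simp add: numeral_2_eq_2)
  show "continuous_on UNIV (\<lambda>(x, p, u). H x p u)" using c0 by simp
  show "continuous_on UNIV (\<lambda>(x, p, u). Hp H x p u)" using c1 by simp
  show "continuous_on UNIV (\<lambda>(x, p, u). Hu H x p u)" using c1 by simp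
  show "continuous_on UNIV (\<lambda>(x, p, u). Hp (Hp H) x p u)" using c2' by simp
  show "continuous_on UNIV (\<lambda>(x, p, u). Hu (Hp H) x p u)" using c2' by simp
  show "continuous_on UNIV (\<lambda>(x, p, u). Hu (Hu H) x p u)" using c2' by simp
  show "((\<lambda>q. H x q v) has_real_derivative Hp H x q v) (at q)" using c1 by (intro diff3_p) simp
  show "((\<lambda>v. H x q v) has_real_derivative Hu H x q v) (at v)" using c1 by (intro diff3_u) simp
  show "((\<lambda>q. Hp H x q v) has_real_derivative Hp (Hp H) x q v) (at q)" using c2' by (intro diff3_p) simp
  show "((\<lambda>v. Hp H x q v) has_real_derivative Hu (Hp H) x q v) (at v)" using c2' by (intro diff3_u) simp
  show "((\<lambda>v. Hu H x q v) has_real_derivative Hu (Hu H) x q v) (at v)" using c2' by (intro diff3_u) simp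
qed



lemma oint_eq:
  fixes g :: "real \<Rightarrow> real"
  assumes "continuous_on UNIV g" "-N \<le> x" "0 \<le> N"
  shows "oint 0 x g = integral {-N..x} g - integral {-N..0} g"
proof (cases "0 \<le> x")
  case True
  have "integral {-N..0} g + integral {0..x} g = integral {-N..x} g"
    by (rule Henstock_Kurzweil_Integration.integral_combine) (use assms True in \<open>auto intro!: integrable_continuous_interval continuous_on_subset[OF assms(1)]\<close>)
  then show ?thesis using True by (simp add: oint_def)
next
  case False
  have "integral {-N..x} g + integral {x..0} g = integral {-N..0} g"
    by (rule Henstock_Kurzweil_Integration.integral_combine) (use assms False in \<open>auto intro!: integrable_continuous_interval continuous_on_subset[OF assms(1)]\<close>)
  then show ?thesis using False by (simp add: oint_def)
qed

lemma oint_deriv: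
  fixes g :: "real \<Rightarrow> real"
  assumes "continuous_on UNIV g"
  shows "((\<lambda>x. oint 0 x g) has_real_derivative g x) (at x)"
proof -
  define N where "N = \<bar>x\<bar> + 1"
  have d: "((\<lambda>s. integral {-N..s} g) has_real_derivative g x) (at x within {-N..N})"
    by (rule integral_has_real_derivative) (use assms in \<open>auto simp: N_def intro!: continuous_on_subset[OF assms(1)]\<close>)
  have "x \<in> interior {-N..N}" using N_def by auto
  then have d2: "((\<lambda>s. integral {-N..s} g) has_real_derivative g x) (at x)"
    using d at_within_interior by metis
  have d3: "((\<lambda>s. integral {-N..s} g - integral {-N..0} g) has_real_derivative g x) (at x)"
    using DERIV_diff[OF d2 DERIV_const] by simp
  show ?thesis
  proof (rule has_field_derivative_transform_within_open[OF d3, of "{-N<..<N}"])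
    fix y assume "y \<in> {-N<..<N}"
    then show "integral {-N..y} g - integral {-N..0} g = oint 0 y g"
      using oint_eq[OF assms, of N y] N_def by auto
  qed (auto simp: N_def)
qed

lemma antideriv_shift:
  fixes G g :: "real \<Rightarrow> real"
  assumes "\<And>x. (G has_real_derivative g x) (at x)" "\<And>x. g (x+1) = g x"
  shows "G (x + 1) = G x + (G 1 - G 0)"
proof -
  have "\<forall>x. ((\<lambda>x. G (x+1) - G x) has_real_derivative 0) (at x)"
  proof
    fix x
    have "((\<lambda>x. G (x+1)) has_real_derivative g (x+1)) (at x)"
      using assms(1)[of "x+1"] DERIV_shift by blast
    then show "((\<lambda>x. G (x+1) - G x) has_real_derivative 0) (at x)"
      using DERIV_diff[OF _ assms(1)[of x]] assms(2) by fastforce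
  qed
  from DERIV_isconst_all[OF this, of x 0] show ?thesis by simp
qed



lemma interior_min:
  fixes f :: "real \<Rightarrow> real"
  assumes "continuous_on UNIV f" "a < c" "c < b" "f c \<le> f a" "f c \<le> f b"
  shows "\<exists>z e. e > 0 \<and> (\<forall>y. \<bar>y - z\<bar> < e \<longrightarrow> f z \<le> f y)"
proof -
  obtain z where z: "z \<in> {a..b}" "\<forall>y\<in>{a..b}. f z \<le> f y"
    using continuous_attains_inf[of "{a..b}" f, OF compact_Icc _ continuous_on_subset[OF assms(1)]] assms(2,3) by auto
  obtain m where m: "a < m" "m < b" "\<forall>y\<in>{a..b}. f m \<le> f y"
  proof (cases "a < z \<and> z < b")
    case True then show ?thesis using that z by blast
  next
    case False
    then have "z = a \<or> z = b" using z by auto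
    then have "f c \<le> f z" using assms by auto
    then have "\<forall>y\<in>{a..b}. f c \<le> f y" using z by force
    then show ?thesis using that assms by blast
  qed
  show ?thesis
  proof (intro exI conjI allI impI)
    show "min (m-a) (b-m) > 0" using m by auto
    fix y assume "\<bar>y - m\<bar> < min (m-a) (b-m)"
    then have "y \<in> {a..b}" by (auto simp: abs_less_iff)
    then show "f m \<le> f y" using m by auto
  qed
qed

lemma no_locmin_shift:
  fixes f :: "real \<Rightarrow> real"
  assumes cont: "continuous_on UNIV f"
    and nomin: "\<And>z e. e > 0 \<Longrightarrow> \<not> (\<forall>y. \<bar>y - z\<bar> < e \<longrightarrow> f z \<le> f y)"
    and sh: "\<And>x. f (x + 1) = f x + d"
  shows "d \<noteq> 0" and "d < 0 \<Longrightarrow> a < b \<Longrightarrow> f b < f a" and "d > 0 \<Longrightarrow> a < b \<Longrightarrow> f a < f b"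
proof -
  show "d \<noteq> 0"
  proof
    assume "d = 0"
    then have "f 1 \<le> f 0" "f 1 \<le> f 2" using sh[of 0] sh[of 1] by auto
    then obtain z e where "e > 0" "\<forall>y. \<bar>y - z\<bar> < e \<longrightarrow> f z \<le> f y"
      using interior_min[OF cont, of 0 1 2] by auto
    then show False using nomin by blast
  qed
next
  assume "d < 0" "a < b"
  show "f b < f a"
  proof (rule ccontr)
    assume "\<not> f b < f a"
    moreover have "f (a - 1) = f a - d" using sh[of "a - 1"] by simp
    ultimately obtain z e where "e > 0" "\<forall>y. \<bar>y - z\<bar> < e \<longrightarrow> f z \<le> f y"
      using interior_min[OF cont, of "a - 1" a b] \<open>d < 0\<close> \<open>a < b\<close> by auto
    then show False using nomin by blast
  qed
next
  assume "d > 0" "a < b"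
  show "f a < f b"
  proof (rule ccontr)
    assume "\<not> f a < f b"
    moreover have "f (b + 1) = f b + d" using sh[of b] by simp
    ultimately obtain z e where "e > 0" "\<forall>y. \<bar>y - z\<bar> < e \<longrightarrow> f z \<le> f y"
      using interior_min[OF cont, of a b "b + 1"] \<open>d > 0\<close> \<open>a < b\<close> by auto
    then show False using nomin by blast
  qed
qed



lemma strict_conv:
  fixes h h' h'' :: "real \<Rightarrow> real"
  assumes d1: "\<And>q. (h has_real_derivative h' q) (at q)"
    and d2: "\<And>q. (h' has_real_derivative h'' q) (at q)"
    and pos: "\<And>q. h'' q > 0" and "a < p" "p < b"
  shows "h p * (b - a) < (b - p) * h a + (p - a) * h b"
proof -
  obtain z1 where z1: "a < z1" "z1 < p" "h p - h a = (p - a) * h' z1"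
    using MVT2[of a p h h'] d1 \<open>a < p\<close> by blast
  obtain z2 where z2: "p < z2" "z2 < b" "h b - h p = (b - p) * h' z2"
    using MVT2[of p b h h'] d1 \<open>p < b\<close> by blast
  obtain z3 where z3: "h' z2 - h' z1 = (z2 - z1) * h'' z3"
    using MVT2[of z1 z2 h' h''] d2 z1 z2 by (metis order.strict_trans)
  have "h' z1 < h' z2" using z3 pos[of z3] z1 z2 by (smt (verit) mult_pos_pos)
  have ha: "h a = h p - (p - a) * h' z1" using z1(3) by simp
  have hb: "h b = h p + (b - p) * h' z2" using z2(3) by simp
  have "(b - p) * h a + (p - a) * h b = h p * (b - a) + (b - p) * (p - a) * (h' z2 - h' z1)"
    unfolding ha hb by (simp add: algebra_simps)
  moreover have "(b - p) * (p - a) * (h' z2 - h' z1) > 0"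
    using \<open>h' z1 < h' z2\<close> assms by simp
  ultimately show ?thesis by linarith
qed

lemma mvt_bound:
  fixes f f' :: "real \<Rightarrow> real"
  assumes d: "\<And>q. (f has_real_derivative f' q) (at q)"
    and bd: "\<And>q. min a b \<le> q \<Longrightarrow> q \<le> max a b \<Longrightarrow> \<bar>f' q\<bar> \<le> M"
  shows "\<bar>f b - f a\<bar> \<le> M * \<bar>b - a\<bar>"
proof (cases a b rule: linorder_cases)
  case less
  obtain z where "a < z" "z < b" "f b - f a = (b - a) * f' z" using MVT2[of a b f f'] d less by blast
  moreover have "\<bar>f' z\<bar> \<le> M" using bd calculation less by auto
  ultimately show ?thesis using less by (simp add: abs_mult mult.commute mult_right_mono)
next
  case equal then show ?thesis by simp
next
  case greater
  obtain z where "b < z" "z < a" "f a - f b = (a - b) * f' z" using MVT2[of b a f f'] d greater by blast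
  moreover have "\<bar>f' z\<bar> \<le> M" using bd calculation greater by auto
  ultimately have "\<bar>f b - f a\<bar> = (a - b) * \<bar>f' z\<bar>" "(a - b) * \<bar>f' z\<bar> \<le> (a - b) * M"
    using greater by (simp_all add: abs_mult abs_minus_commute[of "f b"])
  then show ?thesis using greater by (simp add: abs_minus_commute[of b] mult.commute)
qed



lemma box_bound:
  fixes F :: "real \<Rightarrow> real \<Rightarrow> real \<Rightarrow> real"
  assumes "continuous_on UNIV (\<lambda>(x,p,u). F x p u)"
  shows "\<exists>M. \<forall>x p u. x \<in> {a..b} \<longrightarrow> p \<in> {c..d} \<longrightarrow> u \<in> {e..f} \<longrightarrow> \<bar>F x p u\<bar> \<le> M"
proof -
  let ?S = "{a..b} \<times> {c..d} \<times> {e..f}"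
  let ?G = "\<lambda>(x::real,p::real,u::real). F x p u"
  have cS: "compact ?S" by (intro compact_Times compact_Icc)
  have "compact (?G ` ?S)"
    by (rule compact_continuous_image[OF continuous_on_subset[OF assms subset_UNIV] cS])
  then have "bounded (?G ` ?S)" by (rule compact_imp_bounded)
  then obtain M where M: "\<And>y. y \<in> ?G ` ?S \<Longrightarrow> norm y \<le> M"
    unfolding bounded_iff by metis
  show ?thesis
  proof (intro exI allI impI)
    fix x p u assume "x \<in> {a..b}" "p \<in> {c..d}" "u \<in> {e..f}"
    then have "(x,p,u) \<in> ?S" by simp
    then have "?G (x,p,u) \<in> ?G ` ?S" by (rule imageI)
    then have "norm (?G (x,p,u)) \<le> M" by (rule M)
    then show "\<bar>F x p u\<bar> \<le> M" by simp
  qed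
qed

lemma int_bound:
  fixes F :: "real \<Rightarrow> real"
  assumes "continuous_on {a..b} F"
  shows "\<exists>M. \<forall>x\<in>{a..b}. \<bar>F x\<bar> \<le> M"
proof -
  have "compact (F ` {a..b})" by (rule compact_continuous_image[OF assms compact_Icc])
  then have "bounded (F ` {a..b})" by (rule compact_imp_bounded)
  then obtain M where M: "\<And>y. y \<in> F ` {a..b} \<Longrightarrow> norm y \<le> M"
    unfolding bounded_iff by metis
  show ?thesis
  proof (intro exI ballI)
    fix x assume "x \<in> {a..b}"
    then have "F x \<in> F ` {a..b}" by (rule imageI)
    then show "\<bar>F x\<bar> \<le> M" using M by fastforce
  qed
qed



lemma pos_nbhd:
  fixes f :: "real \<Rightarrow> real"
  assumes "isCont f x" "f x > 0"
  shows "\<exists>d>0. \<forall>w. \<bar>w - x\<bar> < d \<longrightarrow> f w > 0"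
proof -
  obtain d where "d > 0" "\<forall>w. dist w x < d \<longrightarrow> dist (f w) (f x) < f x"
    using assms continuous_at_eps_delta by metis
  then show ?thesis by (auto simp: dist_real_def intro!: exI[of _ d])
qed

lemma C1_intro:
  fixes \<phi> \<phi>' :: "real \<Rightarrow> real"
  assumes "\<And>x. (\<phi> has_real_derivative \<phi>' x) (at x)" "continuous_on UNIV \<phi>'"
  shows "\<phi> C1_differentiable_on UNIV" "deriv \<phi> x = \<phi>' x"
proof -
  show "\<phi> C1_differentiable_on UNIV"
    unfolding C1_differentiable_on_def
    using assms has_real_derivative_iff_has_vector_derivative by blast
  show "deriv \<phi> x = \<phi>' x" using assms(1) DERIV_imp_deriv by blast
qed

lemma per_nat:
  fixes f :: "real \<Rightarrow> 'a"
  assumes "\<And>x. f (x + 1) = f x"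
  shows "f (x + real n) = f x"
proof (induction n)
  case 0 then show ?case by simp
next
  case (Suc n)
  have "f (x + real (Suc n)) = f ((x + real n) + 1)" by (simp add: algebra_simps)
  then show ?case using assms Suc by simp
qed

lemma per_floor:
  fixes f :: "real \<Rightarrow> 'a"
  assumes "\<And>x. f (x + 1) = f x"
  shows "f x = f (x - of_int (floor x))"
proof (cases "floor x \<ge> 0")
  case True
  then obtain n where n: "floor x = int n" by (metis nonneg_int_cases)
  have "f (x - of_int (floor x)) = f ((x - of_int (floor x)) + real n)" using per_nat[of f, OF assms] by simp
  then show ?thesis using n by simp
next
  case False
  then obtain n where n: "floor x = - int n" by (metis nonneg_int_cases neg_int_cases less_le not_le)
  have "f x = f (x + real n)" using per_nat[of f, OF assms] by simp
  then show ?thesis using n by simp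
qed

lemma sq_limit:
  fixes X Y C :: real
  assumes "\<And>s. 0 < s \<Longrightarrow> s < 1 \<Longrightarrow> X < Y + s * C"
  shows "X \<le> Y"
proof (rule ccontr)
  assume "\<not> X \<le> Y"
  define s where "s = min (1/2) ((X - Y) / (2 * (\<bar>C\<bar> + 1)))"
  have s0: "0 < s" "s < 1" using \<open>\<not> X \<le> Y\<close> by (auto simp: s_def)
  have "s * C \<le> s * \<bar>C\<bar>" using s0 by (simp add: mult_left_mono)
  also have "\<dots> \<le> ((X - Y) / (2 * (\<bar>C\<bar> + 1))) * \<bar>C\<bar>"
    by (rule mult_right_mono) (auto simp: s_def)
  also have "\<dots> < (X - Y)"
  proof -
    have "\<bar>C\<bar> / (2 * (\<bar>C\<bar> + 1)) < 1" by (simp add: field_simps)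
    then have "(X - Y) * (\<bar>C\<bar> / (2 * (\<bar>C\<bar> + 1))) < (X - Y) * 1"
      using \<open>\<not> X \<le> Y\<close> by (intro mult_strict_left_mono) auto
    then show ?thesis by (simp add: field_simps)
  qed
  finally show False using assms[OF s0] by linarith
qed

locale visc =
  fixes H :: "real \<Rightarrow> real \<Rightarrow> real \<Rightarrow> real" and u :: "real \<Rightarrow> real"
  assumes H_smooth: "smooth3 H"
    and H_per: "\<And>x p v. H (x + 1) p v = H x p v"
    and H_conv: "\<And>x p v. deriv (\<lambda>q. Hp H x q v) p > 0"
    and H_superlin: "\<And>x v. filterlim (\<lambda>p. H x p v / \<bar>p\<bar>) at_top at_infinity"
    and u_per: "\<And>x. u (x + 1) = u x"
    and u_visc: "viscosity_solution H u"
    and u_nondeg: "\<And>x. u differentiable (at x) \<Longrightarrow> Hp H x (deriv u x) (u x) \<noteq> 0"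
begin

definition Phi where "Phi x p = H x p (u x)"

lemma u_cont: "continuous_on UNIV u"
  using u_visc unfolding viscosity_solution_def viscosity_subsolution_def by blast

lemma u_isCont: "isCont u x"
  using u_cont continuous_on_eq_continuous_at by blast

lemma Phi_per: "Phi (x + 1) p = Phi x p"
  unfolding Phi_def using H_per u_per by simp

lemma Phi_tendsto:
  assumes "(a \<longlongrightarrow> a0) F" "(b \<longlongrightarrow> b0) F"
  shows "((\<lambda>z. Phi (a z) (b z)) \<longlongrightarrow> Phi a0 b0) F"
proof -
  have "((\<lambda>z. u (a z)) \<longlongrightarrow> u a0) F" using isCont_tendsto_compose[OF u_isCont assms(1)] .
  then show ?thesis unfolding Phi_def
    using cont3_tendsto[OF smooth3_facts(1)[OF H_smooth] assms(1,2)] by blast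
qed

lemma Phi_isCont:
  assumes "isCont b x"
  shows "isCont (\<lambda>w. Phi w (b w)) x"
  unfolding isCont_def
  by (rule Phi_tendsto) (use assms isCont_def in auto)

lemma Phi_isCont_const: "isCont (\<lambda>w. Phi w p) x"
  using Phi_isCont[where b="\<lambda>_. p"] by simp

lemma Phi_d1: "((\<lambda>q. Phi x q) has_real_derivative Hp H x q (u x)) (at q)"
  unfolding Phi_def by (rule smooth3_facts(7)[OF H_smooth])

lemma Phi_d2: "((\<lambda>q. Hp H x q (u x)) has_real_derivative Hp (Hp H) x q (u x)) (at q)"
  by (rule smooth3_facts(9)[OF H_smooth])

lemma Phi_d2_pos: "Hp (Hp H) x q (u x) > 0"
  using H_conv[where x=x and p=q and v="u x"] unfolding Hp_def[of "Hp H"] by simp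

lemma conv:
  assumes "a < p" "p < b"
  shows "Phi x p * (b - a) < (b - p) * Phi x a + (p - a) * Phi x b"
  by (rule strict_conv[OF Phi_d1 Phi_d2 Phi_d2_pos assms])

lemma sub_test:
  assumes "\<phi> C1_differentiable_on UNIV" "e > 0" "\<forall>y. \<bar>y - z\<bar> < e \<longrightarrow> u y - \<phi> y \<le> u z - \<phi> z"
  shows "Phi z (deriv \<phi> z) \<le> 0"
  using u_visc assms unfolding viscosity_solution_def viscosity_subsolution_def Phi_def by blast

lemma super_test:
  assumes "\<phi> C1_differentiable_on UNIV" "e > 0" "\<forall>y. \<bar>y - z\<bar> < e \<longrightarrow> u y - \<phi> y \<ge> u z - \<phi> z"
  shows "Phi z (deriv \<phi> z) \<ge> 0"
  using u_visc assms unfolding viscosity_solution_def viscosity_supersolution_def Phi_def by blast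

lemma u_bounded: "\<exists>U. \<forall>y. \<bar>u y\<bar> \<le> U"
proof -
  obtain U where U: "\<forall>x\<in>{0..1}. \<bar>u x\<bar> \<le> U"
    using int_bound[OF continuous_on_subset[OF u_cont subset_UNIV]] by blast
  have "\<bar>u y\<bar> \<le> U" for y
  proof -
    have "u y = u (y - of_int (floor y))" by (rule per_floor[of u, OF u_per])
    moreover have "y - of_int (floor y) \<in> {0..1}"
      using real_of_int_floor_add_one_gt[of y] of_int_floor_le[of y] by (simp del: real_of_int_floor_add_one_gt of_int_floor_le)
    ultimately show ?thesis using U by auto
  qed
  then show ?thesis by blast
qed

end


context visc begin

lemma LC: "\<exists>P0>0. \<exists>\<delta>>0. \<forall>w p. \<bar>w - x\<bar> < \<delta> \<longrightarrow> P0 \<le> \<bar>p\<bar> \<longrightarrow> Phi w p > 0"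
proof -
  define C where "C = \<bar>Phi x 0\<bar> + 2"
  have "\<forall>Z. eventually (\<lambda>p. Z \<le> H x p (u x) / \<bar>p\<bar>) at_infinity"
    by (rule filterlim_at_top[THEN iffD1]) (rule H_superlin)
  then have "eventually (\<lambda>p. C \<le> H x p (u x) / \<bar>p\<bar>) at_infinity" by blast
  then obtain R where R: "\<And>p. R \<le> norm p \<Longrightarrow> C \<le> H x p (u x) / \<bar>p\<bar>"
    unfolding eventually_at_infinity by blast
  define P0 where "P0 = max R 1"
  have P0: "P0 \<ge> 1" "P0 > 0" unfolding P0_def by auto
  have Cpos: "C > 0" unfolding C_def by (simp add: add_nonneg_pos)
  have "C \<le> Phi x P0 / P0" using R[of P0] P0 unfolding Phi_def P0_def by auto
  then have "C * P0 \<le> Phi x P0" using P0 by (simp add: field_simps)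
  moreover have "C * 1 \<le> C * P0" using P0 Cpos by (intro mult_left_mono) auto
  ultimately have hp: "Phi x P0 \<ge> C" by linarith
  have "C \<le> Phi x (-P0) / P0" using R[of "-P0"] P0 unfolding Phi_def P0_def by auto
  then have "C * P0 \<le> Phi x (-P0)" using P0 by (simp add: field_simps)
  moreover have "C * 1 \<le> C * P0" using P0 Cpos by (intro mult_left_mono) auto
  ultimately have hm: "Phi x (-P0) \<ge> C" by linarith
  have c1: "isCont (\<lambda>w. Phi w P0 - max 0 (Phi w 0)) x"
    using Phi_isCont_const by (intro continuous_intros) auto
  have c2: "isCont (\<lambda>w. Phi w (-P0) - max 0 (Phi w 0)) x"
    using Phi_isCont_const by (intro continuous_intros) auto
  obtain d1 where d1: "d1 > 0" "\<And>w. \<bar>w - x\<bar> < d1 \<Longrightarrow> Phi w P0 - max 0 (Phi w 0) > 0"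
    using pos_nbhd[OF c1] hp C_def by fastforce
  obtain d2 where d2: "d2 > 0" "\<And>w. \<bar>w - x\<bar> < d2 \<Longrightarrow> Phi w (-P0) - max 0 (Phi w 0) > 0"
    using pos_nbhd[OF c2] hm C_def by fastforce
  have main: "Phi w p > 0" if w: "\<bar>w - x\<bar> < min d1 d2" and p: "P0 \<le> \<bar>p\<bar>" for w p
  proof -
    define A where "A = Phi w P0"
    define A' where "A' = Phi w (-P0)"
    define M0 where "M0 = max 0 (Phi w 0)"
    have A: "A > M0" "M0 \<ge> 0" "Phi w 0 \<le> M0" using d1(2) w unfolding A_def M0_def by auto
    have A': "A' > M0" using d2(2) w unfolding A'_def M0_def by auto
    show ?thesis
    proof (cases "p \<ge> 0")
      case True
      show ?thesis
      proof (cases "p = P0")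
        case True then show ?thesis using A A_def by auto
      next
        case False
        then have pp: "P0 < p" using p True by auto
        have cv: "A * (p - 0) < (p - P0) * Phi w 0 + (P0 - 0) * Phi w p"
          using conv[of 0 P0 p w] P0 pp unfolding A_def by auto
        show ?thesis
        proof (rule ccontr)
          assume "\<not> Phi w p > 0"
          then have "P0 * Phi w p \<le> 0" using P0 by (simp add: mult_nonneg_nonpos)
          moreover have "(p - P0) * Phi w 0 \<le> (p - P0) * A"
            using A pp by (intro mult_left_mono) auto
          ultimately have "A * p < (p - P0) * A" using cv by simp
          then have "A * P0 < 0" by (simp add: algebra_simps)
          moreover have "A * P0 > 0" using A P0 by simp
          ultimately show False by simp
        qed
      qed
    next
      case False
      show ?thesis
      proof (cases "p = -P0")
        case True then show ?thesis using A' A'_def A by auto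
      next
        case F2: False
        then have pp: "p < -P0" using p False by auto
        have cv: "A' * (0 - p) < (0 - (-P0)) * Phi w p + (-P0 - p) * Phi w 0"
          using conv[of p "-P0" 0 w] P0 pp unfolding A'_def by auto
        show ?thesis
        proof (rule ccontr)
          assume "\<not> Phi w p > 0"
          then have "P0 * Phi w p \<le> 0" using P0 by (simp add: mult_nonneg_nonpos)
          moreover have "(-P0 - p) * Phi w 0 \<le> (-P0 - p) * A'"
            using A A' pp by (intro mult_left_mono) auto
          ultimately have "A' * (-p) < (-P0 - p) * A'" using cv by simp
          then have "A' * P0 < 0" by (simp add: algebra_simps)
          moreover have "A' * P0 > 0" using A A' P0 by simp
          ultimately show False by simp
        qed
      qed
    qed
  qed
  show ?thesis
    apply (rule exI[of _ P0], simp add: P0)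
    apply (rule exI[of _ "min d1 d2"])
    using d1 d2 main by auto
qed

lemma exists_nonpos: "\<exists>p. Phi x p \<le> 0"
proof -
  obtain P0 \<delta> where P0: "P0 > 0" "\<delta> > 0" "\<And>w p. \<bar>w - x\<bar> < \<delta> \<Longrightarrow> P0 \<le> \<bar>p\<bar> \<Longrightarrow> Phi w p > 0"
    using LC[of x] by blast
  obtain U where U: "\<And>y. \<bar>u y\<bar> \<le> U" using u_bounded by blast
  have step: "\<exists>zp. \<bar>fst zp - x\<bar> < 1 / real (Suc n) \<and> \<bar>snd zp\<bar> \<le> P0 \<and> Phi (fst zp) (snd zp) \<le> 0" for n
  proof -
    define r where "r = min (\<delta>/2) (1 / real (Suc n))"
    have r: "r > 0" "r \<le> \<delta>/2" "r \<le> 1 / real (Suc n)" using P0 unfolding r_def by auto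
    define M where "M = (2*U+1)/r^2"
    define \<phi> where "\<phi> = (\<lambda>w. M * (w - x)^2)"
    have d\<phi>: "(\<phi> has_real_derivative 2 * M * (w - x)) (at w)" for w
      unfolding \<phi>_def by (auto intro!: derivative_eq_intros)
    have C1: "\<phi> C1_differentiable_on UNIV" "deriv \<phi> w = 2 * M * (w - x)" for w
      by (rule C1_intro[OF d\<phi>], intro continuous_intros)+
    have cont: "continuous_on {x-r..x+r} (\<lambda>w. u w - \<phi> w)"
      unfolding \<phi>_def by (intro continuous_intros continuous_on_subset[OF u_cont]) auto
    obtain z where z: "z \<in> {x-r..x+r}" "\<And>y. y \<in> {x-r..x+r} \<Longrightarrow> u y - \<phi> y \<le> u z - \<phi> z"
      using continuous_attains_sup[OF compact_Icc _ cont] r by fastforce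
    have Mr: "M * r^2 = 2*U+1" unfolding M_def using r by simp
    have end1: "u (x - r) - \<phi> (x - r) < u x - \<phi> x"
      using U[of "x - r"] U[of x] Mr unfolding \<phi>_def by (simp add: abs_le_iff)
    have end2: "u (x + r) - \<phi> (x + r) < u x - \<phi> x"
      using U[of "x + r"] U[of x] Mr unfolding \<phi>_def by (simp add: abs_le_iff)
    have zx: "u x - \<phi> x \<le> u z - \<phi> z" using z(2)[of x] r by auto
    have zi: "x - r < z" "z < x + r"
      using z(1) zx end1 end2 by (auto simp: order.order_iff_strict)
    have lm: "\<forall>y. \<bar>y - z\<bar> < min (z - (x - r)) (x + r - z) \<longrightarrow> u y - \<phi> y \<le> u z - \<phi> z"
      using z(2) by (auto simp: abs_less_iff)
    have Pz: "Phi z (2 * M * (z - x)) \<le> 0"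
      using sub_test[OF C1(1) _ lm] zi C1(2)[of z] by auto
    have zd: "\<bar>z - x\<bar> < \<delta>" using zi r by auto
    have "\<bar>2 * M * (z - x)\<bar> \<le> P0"
    proof (rule ccontr)
      assume "\<not> \<bar>2 * M * (z - x)\<bar> \<le> P0"
      then have "Phi z (2 * M * (z - x)) > 0" using P0(3)[OF zd] by auto
      then show False using Pz by simp
    qed
    moreover have "\<bar>z - x\<bar> < 1 / real (Suc n)" using zi r by auto
    ultimately show ?thesis using Pz by (intro exI[of _ "(z, 2 * M * (z - x))"]) auto
  qed
  then obtain ZP where ZP: "\<And>n. \<bar>fst (ZP n) - x\<bar> < 1 / real (Suc n) \<and> \<bar>snd (ZP n)\<bar> \<le> P0 \<and> Phi (fst (ZP n)) (snd (ZP n)) \<le> 0"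
    by metis
  define Z where "Z = (\<lambda>n. fst (ZP n))"
  define Pp where "Pp = (\<lambda>n. snd (ZP n))"
  have "(\<lambda>n. Z n - x) \<longlonglongrightarrow> 0"
  proof (rule Lim_null_comparison)
    show "\<forall>\<^sub>F n in sequentially. norm (Z n - x) \<le> 1 / real (Suc n)"
      using ZP unfolding Z_def by (auto intro!: always_eventually less_imp_le)
    show "(\<lambda>n. 1 / real (Suc n)) \<longlonglongrightarrow> 0"
      using LIMSEQ_inverse_real_of_nat by (simp add: inverse_eq_divide)
  qed
  then have Zx: "Z \<longlonglongrightarrow> x" by (rule LIM_zero_cancel)
  have "seq_compact {-P0..P0}" by (rule compact_imp_seq_compact[OF compact_Icc])
  moreover have "\<forall>n. Pp n \<in> {-P0..P0}"
  proof
    fix n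
    have "\<bar>Pp n\<bar> \<le> P0" using ZP[of n] unfolding Pp_def by simp
    then show "Pp n \<in> {-P0..P0}" by (auto simp: abs_le_iff)
  qed
  ultimately obtain l r where lr: "l \<in> {-P0..P0}" "strict_mono r" "(Pp \<circ> r) \<longlonglongrightarrow> l"
    unfolding seq_compact_def by metis
  have "(Z \<circ> r) \<longlonglongrightarrow> x" by (rule LIMSEQ_subseq_LIMSEQ[OF Zx lr(2)])
  then have "(\<lambda>n. Phi ((Z \<circ> r) n) ((Pp \<circ> r) n)) \<longlonglongrightarrow> Phi x l"
    by (rule Phi_tendsto[OF _ lr(3)])
  moreover have "\<forall>\<^sub>F n in sequentially. Phi ((Z \<circ> r) n) ((Pp \<circ> r) n) \<le> 0"
    using ZP unfolding Z_def Pp_def by (auto intro!: always_eventually)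
  ultimately have "Phi x l \<le> 0" by (rule tendsto_upperbound) simp
  then show ?thesis by blast
qed

end


context visc begin

definition Sl where "Sl x = {p. Phi x p \<le> 0}"
definition alpha where "alpha x = Inf (Sl x)"
definition beta where "beta x = Sup (Sl x)"

lemma Phi_cont_p: "continuous_on UNIV (\<lambda>p. Phi x p)"
  using Phi_d1 DERIV_isCont continuous_at_imp_continuous_on by blast

lemma Sl_ne: "Sl x \<noteq> {}" using exists_nonpos[of x] unfolding Sl_def by auto

lemma Sl_bdd: "bdd_above (Sl x)" "bdd_below (Sl x)"
proof -
  obtain P0 \<delta> where P0: "P0 > 0" "\<delta> > 0" "\<And>w p. \<bar>w - x\<bar> < \<delta> \<Longrightarrow> P0 \<le> \<bar>p\<bar> \<Longrightarrow> Phi w p > 0"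
    using LC[of x] by blast
  have "\<bar>p\<bar> < P0" if "p \<in> Sl x" for p
    using P0(2) P0(3)[of x p] that unfolding Sl_def by force
  then show "bdd_above (Sl x)" "bdd_below (Sl x)"
    by (intro bdd_aboveI[of _ P0] bdd_belowI[of _ "-P0"], force simp: abs_less_iff)+
qed

lemma Sl_closed: "closed (Sl x)"
  unfolding Sl_def by (rule closed_Collect_le[OF Phi_cont_p continuous_on_const])

lemma alpha_in: "alpha x \<in> Sl x"
  unfolding alpha_def by (rule closed_contains_Inf[OF Sl_ne Sl_bdd(2) Sl_closed])

lemma beta_in: "beta x \<in> Sl x"
  unfolding beta_def by (rule closed_contains_Sup[OF Sl_ne Sl_bdd(1) Sl_closed])

lemma Sl_bounds: "p \<in> Sl x \<Longrightarrow> alpha x \<le> p \<and> p \<le> beta x"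
  unfolding alpha_def beta_def using cInf_lower[OF _ Sl_bdd(2)] cSup_upper[OF _ Sl_bdd(1)] by blast

lemma alpha_le_beta: "alpha x \<le> beta x" using Sl_bounds[OF alpha_in] by simp

lemma Phi_alpha: "Phi x (alpha x) \<le> 0" using alpha_in unfolding Sl_def by simp
lemma Phi_beta: "Phi x (beta x) \<le> 0" using beta_in unfolding Sl_def by simp

lemma A2: assumes "alpha x < p" "p < beta x" shows "Phi x p < 0"
proof -
  have "Phi x p * (beta x - alpha x) < (beta x - p) * Phi x (alpha x) + (p - alpha x) * Phi x (beta x)"
    by (rule conv) (use assms in auto)
  also have "\<dots> \<le> 0" using assms Phi_alpha[of x] Phi_beta[of x]
    by (intro add_nonpos_nonpos mult_nonneg_nonpos) auto
  finally show ?thesis using assms by (simp add: mult_less_0_iff)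
qed

lemma A1: "Phi x p \<le> 0 \<longleftrightarrow> alpha x \<le> p \<and> p \<le> beta x"
proof
  assume "Phi x p \<le> 0" then show "alpha x \<le> p \<and> p \<le> beta x" using Sl_bounds unfolding Sl_def by auto
next
  assume h: "alpha x \<le> p \<and> p \<le> beta x"
  then consider "p = alpha x" | "p = beta x" | "alpha x < p \<and> p < beta x" by linarith
  then show "Phi x p \<le> 0" using Phi_alpha Phi_beta A2 by (cases, auto intro: less_imp_le)
qed

lemma Sl_per: "Sl (x + 1) = Sl x" unfolding Sl_def using Phi_per by simp
lemma alpha_per: "alpha (x + 1) = alpha x" unfolding alpha_def Sl_per ..
lemma beta_per: "beta (x + 1) = beta x" unfolding beta_def Sl_per ..

lemma USC:
  assumes "\<epsilon> > 0"
  shows "\<exists>\<delta>>0. \<forall>w p. \<bar>w - y\<bar> < \<delta> \<longrightarrow> Phi w p \<le> 0 \<longrightarrow> alpha y - \<epsilon> < p \<and> p < beta y + \<epsilon>"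
proof -
  define a where "a = alpha y - \<epsilon>"
  define b where "b = beta y + \<epsilon>"
  define m where "m = alpha y"
  have pa: "Phi y a > 0" using A1[of y a] assms unfolding a_def by auto
  have pb: "Phi y b > 0" using A1[of y b] assms unfolding b_def by auto
  define c0 where "c0 = min (Phi y a) (Phi y b) / 2"
  have c0: "c0 > 0" "c0 < Phi y a" "c0 < Phi y b" using pa pb unfolding c0_def by auto
  have pm: "Phi y m < c0" using Phi_alpha[of y] c0 unfolding m_def by auto
  obtain d1 where d1: "d1 > 0" "\<And>w. \<bar>w - y\<bar> < d1 \<Longrightarrow> Phi w a - c0 > 0"
    using pos_nbhd[where f="\<lambda>w. Phi w a - c0" and x=y] Phi_isCont_const c0 by (force intro: continuous_intros)
  obtain d2 where d2: "d2 > 0" "\<And>w. \<bar>w - y\<bar> < d2 \<Longrightarrow> Phi w b - c0 > 0"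
    using pos_nbhd[where f="\<lambda>w. Phi w b - c0" and x=y] Phi_isCont_const c0 by (force intro: continuous_intros)
  obtain d3 where d3: "d3 > 0" "\<And>w. \<bar>w - y\<bar> < d3 \<Longrightarrow> c0 - Phi w m > 0"
    using pos_nbhd[where f="\<lambda>w. c0 - Phi w m" and x=y] Phi_isCont_const pm by (force intro: continuous_intros)
  have main: "a < p \<and> p < b" if w: "\<bar>w - y\<bar> < min d1 (min d2 d3)" and p: "Phi w p \<le> 0" for w p
  proof -
    have wa: "Phi w a > c0" and wb: "Phi w b > c0" and wm: "Phi w m < c0"
      using d1(2)[of w] d2(2)[of w] d3(2)[of w] w by auto
    have mab: "a < m" "m < b" using assms alpha_le_beta[of y] unfolding a_def b_def m_def by auto
    have "p < b"
    proof (rule ccontr)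
      assume "\<not> p < b"
      then have "b < p \<or> b = p" by auto
      then show False
      proof
        assume bp: "b < p"
        have cv: "Phi w b * (p - m) < (p - b) * Phi w m + (b - m) * Phi w p"
          by (rule conv) (use mab bp in auto)
        have "(b - m) * Phi w p \<le> 0" using mab p by (simp add: mult_nonneg_nonpos)
        moreover have "(p - b) * Phi w m \<le> (p - b) * c0" using bp wm by (intro mult_left_mono) auto
        moreover have "(p - b) * c0 \<le> (p - m) * c0" using mab c0 by (intro mult_right_mono) auto
        moreover have "c0 * (p - m) < Phi w b * (p - m)" using wb mab bp by (intro mult_strict_right_mono) auto
        ultimately show False using cv by (simp add: algebra_simps)
      next
        assume "b = p" then show False using wb c0 p by auto
      qed
    qed
    moreover have "a < p"
    proof (rule ccontr)
      assume "\<not> a < p"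
      then have "p < a \<or> a = p" by auto
      then show False
      proof
        assume pa: "p < a"
        have cv: "Phi w a * (m - p) < (m - a) * Phi w p + (a - p) * Phi w m"
          by (rule conv) (use mab pa in auto)
        have "(m - a) * Phi w p \<le> 0" using mab p by (simp add: mult_nonneg_nonpos)
        moreover have "(a - p) * Phi w m \<le> (a - p) * c0" using pa wm by (intro mult_left_mono) auto
        moreover have "(a - p) * c0 \<le> (m - p) * c0" using mab c0 by (intro mult_right_mono) auto
        moreover have "c0 * (m - p) < Phi w a * (m - p)" using wa mab pa by (intro mult_strict_right_mono) auto
        ultimately show False using cv by (simp add: algebra_simps)
      next
        assume "a = p" then show False using wa c0 p by auto
      qed
    qed
    ultimately show ?thesis by simp
  qed
  show ?thesis
    apply (rule exI[of _ "min d1 (min d2 d3)"])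
    using d1 d2 d3 main unfolding a_def b_def by auto
qed

lemma beta_near:
  assumes "\<epsilon> > 0"
  shows "\<exists>d>0. \<forall>w. \<bar>w - y\<bar> < d \<longrightarrow> \<bar>beta w - beta y\<bar> < \<epsilon>"
proof -
  obtain d1 where d1: "d1 > 0" "\<And>w p. \<bar>w - y\<bar> < d1 \<Longrightarrow> Phi w p \<le> 0 \<Longrightarrow> alpha y - \<epsilon> < p \<and> p < beta y + \<epsilon>"
    using USC[OF assms, of y] by blast
  have up: "beta w < beta y + \<epsilon>" if "\<bar>w - y\<bar> < d1" for w using d1(2)[OF that Phi_beta] by simp
  show ?thesis
  proof (cases "alpha y < beta y - \<epsilon>/2")
    case True
    define q where "q = beta y - \<epsilon>/2"
    have "Phi y q < 0" using A2[of y q] True assms unfolding q_def by auto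
    then obtain d2 where d2: "d2 > 0" "\<And>w. \<bar>w - y\<bar> < d2 \<Longrightarrow> - Phi w q > 0"
      using pos_nbhd[where f="\<lambda>w. - Phi w q" and x=y] Phi_isCont_const by (force intro: continuous_intros)
    have "\<bar>beta w - beta y\<bar> < \<epsilon>" if "\<bar>w - y\<bar> < min d1 d2" for w
    proof -
      have "q \<le> beta w" using d2(2)[of w] that A1[of w q] by auto
      then show ?thesis using up[of w] that assms unfolding q_def by auto
    qed
    then show ?thesis using d1 d2 by (intro exI[of _ "min d1 d2"]) auto
  next
    case False
    obtain d3 where d3: "d3 > 0" "\<And>w p. \<bar>w - y\<bar> < d3 \<Longrightarrow> Phi w p \<le> 0 \<Longrightarrow> alpha y - \<epsilon>/2 < p \<and> p < beta y + \<epsilon>/2"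
      using USC[of "\<epsilon>/2" y] assms by auto
    have "\<bar>beta w - beta y\<bar> < \<epsilon>" if "\<bar>w - y\<bar> < min d1 d3" for w
    proof -
      have "alpha y - \<epsilon>/2 < alpha w" using d3(2)[OF _ Phi_alpha, of w] that by auto
      then have "beta y - \<epsilon> < beta w" using alpha_le_beta[of w] False by linarith
      then show ?thesis using up[of w] that by auto
    qed
    then show ?thesis using d1 d3 by (intro exI[of _ "min d1 d3"]) auto
  qed
qed

lemma alpha_near:
  assumes "\<epsilon> > 0"
  shows "\<exists>d>0. \<forall>w. \<bar>w - y\<bar> < d \<longrightarrow> \<bar>alpha w - alpha y\<bar> < \<epsilon>"
proof -
  obtain d1 where d1: "d1 > 0" "\<And>w p. \<bar>w - y\<bar> < d1 \<Longrightarrow> Phi w p \<le> 0 \<Longrightarrow> alpha y - \<epsilon> < p \<and> p < beta y + \<epsilon>"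
    using USC[OF assms, of y] by blast
  have lo: "alpha y - \<epsilon> < alpha w" if "\<bar>w - y\<bar> < d1" for w using d1(2)[OF that Phi_alpha] by simp
  show ?thesis
  proof (cases "alpha y + \<epsilon>/2 < beta y")
    case True
    define q where "q = alpha y + \<epsilon>/2"
    have "Phi y q < 0" using A2[of y q] True assms unfolding q_def by auto
    then obtain d2 where d2: "d2 > 0" "\<And>w. \<bar>w - y\<bar> < d2 \<Longrightarrow> - Phi w q > 0"
      using pos_nbhd[where f="\<lambda>w. - Phi w q" and x=y] Phi_isCont_const by (force intro: continuous_intros)
    have "\<bar>alpha w - alpha y\<bar> < \<epsilon>" if "\<bar>w - y\<bar> < min d1 d2" for w
    proof -
      have "alpha w \<le> q" using d2(2)[of w] that A1[of w q] by auto
      then show ?thesis using lo[of w] that assms unfolding q_def by auto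
    qed
    then show ?thesis using d1 d2 by (intro exI[of _ "min d1 d2"]) auto
  next
    case False
    obtain d3 where d3: "d3 > 0" "\<And>w p. \<bar>w - y\<bar> < d3 \<Longrightarrow> Phi w p \<le> 0 \<Longrightarrow> alpha y - \<epsilon>/2 < p \<and> p < beta y + \<epsilon>/2"
      using USC[of "\<epsilon>/2" y] assms by auto
    have "\<bar>alpha w - alpha y\<bar> < \<epsilon>" if "\<bar>w - y\<bar> < min d1 d3" for w
    proof -
      have "beta w < beta y + \<epsilon>/2" using d3(2)[OF _ Phi_beta, of w] that by auto
      then have "alpha w < alpha y + \<epsilon>" using alpha_le_beta[of w] False by linarith
      then show ?thesis using lo[of w] that by auto
    qed
    then show ?thesis using d1 d3 by (intro exI[of _ "min d1 d3"]) auto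
  qed
qed

lemma beta_cont: "continuous_on UNIV beta"
proof -
  have "isCont beta y" for y
    unfolding continuous_at_eps_delta dist_real_def using beta_near by blast
  then show ?thesis by (simp add: continuous_at_imp_continuous_on)
qed

lemma alpha_cont: "continuous_on UNIV alpha"
proof -
  have "isCont alpha y" for y
    unfolding continuous_at_eps_delta dist_real_def using alpha_near by blast
  then show ?thesis by (simp add: continuous_at_imp_continuous_on)
qed

end


lemma divide_swap: "((a::real) - b) / (c - d) = (b - a) / (d - c)"
  by (metis minus_diff_eq minus_divide_divide)

context visc begin

definition GA where "GA x = oint 0 x alpha"
definition GB where "GB x = oint 0 x beta"
definition cA where "cA = GA 1 - GA 0"
definition cB where "cB = GB 1 - GB 0"

lemma GA_d: "(GA has_real_derivative alpha x) (at x)"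
  unfolding GA_def[abs_def] by (rule oint_deriv[OF alpha_cont])
lemma GB_d: "(GB has_real_derivative beta x) (at x)"
  unfolding GB_def[abs_def] by (rule oint_deriv[OF beta_cont])
lemma GA_shift: "GA (x + 1) = GA x + cA"
  unfolding cA_def by (rule antideriv_shift[OF GA_d alpha_per])
lemma GB_shift: "GB (x + 1) = GB x + cB"
  unfolding cB_def by (rule antideriv_shift[OF GB_d beta_per])

lemma GA_cont: "continuous_on UNIV GA"
  using GA_d DERIV_isCont continuous_at_imp_continuous_on by blast
lemma GB_cont: "continuous_on UNIV GB"
  using GB_d DERIV_isCont continuous_at_imp_continuous_on by blast

lemma S1_nomin:
  assumes "lam > 0" "e > 0"
  shows "\<not> (\<forall>y. \<bar>y - z\<bar> < e \<longrightarrow> GB z + lam * z - u z \<le> GB y + lam * y - u y)"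
proof
  assume h: "\<forall>y. \<bar>y - z\<bar> < e \<longrightarrow> GB z + lam * z - u z \<le> GB y + lam * y - u y"
  define \<phi> where "\<phi> = (\<lambda>x. GB x + lam * x)"
  have d: "(\<phi> has_real_derivative beta x + lam) (at x)" for x
    unfolding \<phi>_def by (auto intro!: derivative_eq_intros GB_d)
  have C1: "\<phi> C1_differentiable_on UNIV" "deriv \<phi> x = beta x + lam" for x
    by (rule C1_intro[OF d], intro continuous_intros beta_cont)+
  have "\<forall>y. \<bar>y - z\<bar> < e \<longrightarrow> u y - \<phi> y \<le> u z - \<phi> z" using h unfolding \<phi>_def by force
  from sub_test[OF C1(1) assms(2) this] have "Phi z (beta z + lam) \<le> 0" using C1(2) by simp
  then show False using A1 assms by auto
qed

lemma S1_f:
  assumes "lam > 0"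
  shows "cB + lam \<noteq> 0" "cB + lam > 0 \<Longrightarrow> a < b \<Longrightarrow> GB a + lam * a - u a < GB b + lam * b - u b"
proof -
  let ?f = "\<lambda>x. GB x + lam * x - u x"
  have cont: "continuous_on UNIV ?f" by (intro continuous_intros GB_cont u_cont)
  have sh: "?f (x + 1) = ?f x + (cB + lam)" for x using GB_shift[of x] u_per[of x] by (simp add: algebra_simps)
  have nm: "\<And>z e. e > 0 \<Longrightarrow> \<not> (\<forall>y. \<bar>y - z\<bar> < e \<longrightarrow> ?f z \<le> ?f y)" using S1_nomin[OF assms] by blast
  show "cB + lam \<noteq> 0" by (rule no_locmin_shift(1)[OF cont nm sh])
  show "cB + lam > 0 \<Longrightarrow> a < b \<Longrightarrow> ?f a < ?f b" by (rule no_locmin_shift(3)[OF cont nm sh])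
qed

lemma cB_nonneg: "cB \<ge> 0"
  using S1_f(1)[of "- cB"] by force

lemma upper_bound: assumes "a < b" shows "u b - u a \<le> GB b - GB a"
proof (rule sq_limit[where C="b - a"])
  fix s :: real assume "0 < s" "s < 1"
  then have "GB a + s * a - u a < GB b + s * b - u b" using S1_f(2)[of s a b] cB_nonneg assms by auto
  then show "u b - u a < GB b - GB a + s * (b - a)" by (simp add: algebra_simps)
qed

lemma S2_nomin:
  assumes "lam > 0" "e > 0"
  shows "\<not> (\<forall>y. \<bar>y - z\<bar> < e \<longrightarrow> GA z - lam * z - u z \<le> GA y - lam * y - u y)"
proof
  assume h: "\<forall>y. \<bar>y - z\<bar> < e \<longrightarrow> GA z - lam * z - u z \<le> GA y - lam * y - u y"
  define \<phi> where "\<phi> = (\<lambda>x. GA x - lam * x)"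
  have d: "(\<phi> has_real_derivative alpha x - lam) (at x)" for x
    unfolding \<phi>_def by (auto intro!: derivative_eq_intros GA_d)
  have C1: "\<phi> C1_differentiable_on UNIV" "deriv \<phi> x = alpha x - lam" for x
    by (rule C1_intro[OF d], intro continuous_intros alpha_cont)+
  have "\<forall>y. \<bar>y - z\<bar> < e \<longrightarrow> u y - \<phi> y \<le> u z - \<phi> z" using h unfolding \<phi>_def by force
  from sub_test[OF C1(1) assms(2) this] have "Phi z (alpha z - lam) \<le> 0" using C1(2) by simp
  then show False using A1 assms by auto
qed

lemma S2_f:
  assumes "lam > 0"
  shows "cA - lam \<noteq> 0" "cA - lam < 0 \<Longrightarrow> a < b \<Longrightarrow> GA b - lam * b - u b < GA a - lam * a - u a"
proof -
  let ?f = "\<lambda>x. GA x - lam * x - u x"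
  have cont: "continuous_on UNIV ?f" by (intro continuous_intros GA_cont u_cont)
  have sh: "?f (x + 1) = ?f x + (cA - lam)" for x using GA_shift[of x] u_per[of x] by (simp add: algebra_simps)
  have nm: "\<And>z e. e > 0 \<Longrightarrow> \<not> (\<forall>y. \<bar>y - z\<bar> < e \<longrightarrow> ?f z \<le> ?f y)" using S2_nomin[OF assms] by blast
  show "cA - lam \<noteq> 0" by (rule no_locmin_shift(1)[OF cont nm sh])
  show "cA - lam < 0 \<Longrightarrow> a < b \<Longrightarrow> ?f b < ?f a" by (rule no_locmin_shift(2)[OF cont nm sh])
qed

lemma cA_nonpos: "cA \<le> 0"
  using S2_f(1)[of cA] by force

lemma lower_bound: assumes "a < b" shows "GA b - GA a \<le> u b - u a"
proof (rule sq_limit[where C="b - a"])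
  fix s :: real assume "0 < s" "s < 1"
  then have "GA b - s * b - u b < GA a - s * a - u a" using S2_f(2)[of s a b] cA_nonpos assms by auto
  then show "GA b - GA a < u b - u a + s * (b - a)" by (simp add: algebra_simps)
qed

lemma nondeg_ab: "alpha y < beta y"
proof (rule ccontr)
  assume "\<not> alpha y < beta y"
  then have eq: "alpha y = beta y" using alpha_le_beta[of y] by simp
  define \<gamma> where "\<gamma> = alpha y"
  let ?Q = "\<lambda>w. (u w - u y) / (w - y)"
  let ?QA = "\<lambda>w. (GA w - GA y) / (w - y)"
  let ?QB = "\<lambda>w. (GB w - GB y) / (w - y)"
  have lA: "(?QA \<longlongrightarrow> \<gamma>) (at y)" using GA_d[of y] unfolding has_field_derivative_iff \<gamma>_def .
  have lB: "(?QB \<longlongrightarrow> \<gamma>) (at y)" using GB_d[of y] unfolding has_field_derivative_iff \<gamma>_def eq .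
  have bnd: "?QA w \<le> ?Q w \<and> ?Q w \<le> ?QB w" if "w \<noteq> y" for w
  proof (cases "y < w")
    case True
    have "GA w - GA y \<le> u w - u y" "u w - u y \<le> GB w - GB y"
      using lower_bound[OF True] upper_bound[OF True] by auto
    then show ?thesis using True by (auto intro: divide_right_mono)
  next
    case False
    then have wy: "w < y" using that by auto
    have "GA y - GA w \<le> u y - u w" "u y - u w \<le> GB y - GB w"
      using lower_bound[OF wy] upper_bound[OF wy] by auto
    then have "(GA y - GA w) / (y - w) \<le> (u y - u w) / (y - w)" "(u y - u w) / (y - w) \<le> (GB y - GB w) / (y - w)"
      using wy by (auto intro: divide_right_mono)
    then show ?thesis by (simp add: divide_swap[of "GA w"] divide_swap[of "u w"] divide_swap[of "GB w"])
  qed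
  have ev1: "\<forall>\<^sub>F w in at y. ?QA w \<le> ?Q w" and ev2: "\<forall>\<^sub>F w in at y. ?Q w \<le> ?QB w"
    using bnd unfolding eventually_at_filter by (auto intro!: always_eventually)
  have "(?Q \<longlongrightarrow> \<gamma>) (at y)" by (rule tendsto_sandwich[OF ev1 ev2 lA lB])
  then have ud: "(u has_real_derivative \<gamma>) (at y)" unfolding has_field_derivative_iff .
  then have "u differentiable (at y)" "deriv u y = \<gamma>"
    using real_differentiable_def DERIV_imp_deriv by blast+
  then have ne: "Hp H y \<gamma> (u y) \<noteq> 0" using u_nondeg by metis
  have "\<forall>q. \<bar>\<gamma> - q\<bar> < 1 \<longrightarrow> Phi y \<gamma> \<le> Phi y q"
  proof (intro allI impI)
    fix q
    show "Phi y \<gamma> \<le> Phi y q"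
    proof (cases "Phi y q \<le> 0")
      case True
      then have "q = \<gamma>" using A1[of y q] eq unfolding \<gamma>_def by auto
      then show ?thesis by simp
    next
      case False then show ?thesis using Phi_alpha[of y] unfolding \<gamma>_def by simp
    qed
  qed
  then have "Hp H y \<gamma> (u y) = 0"
    using DERIV_local_min[OF Phi_d1[of y \<gamma>], of 1] by simp
  then show False using ne by simp
qed

lemma S3_f:
  assumes "0 < t" "t < 1"
  shows "cA + t * (cB - cA) \<noteq> 0"
    "cA + t * (cB - cA) > 0 \<Longrightarrow> a < b \<Longrightarrow> u b - (GA b + t * (GB b - GA b)) < u a - (GA a + t * (GB a - GA a))"
    "cA + t * (cB - cA) < 0 \<Longrightarrow> a < b \<Longrightarrow> u a - (GA a + t * (GB a - GA a)) < u b - (GA b + t * (GB b - GA b))"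
proof -
  define \<phi> where "\<phi> = (\<lambda>x. GA x + t * (GB x - GA x))"
  let ?f = "\<lambda>x. u x - \<phi> x"
  have d: "(\<phi> has_real_derivative alpha x + t * (beta x - alpha x)) (at x)" for x
    unfolding \<phi>_def by (auto intro!: derivative_eq_intros GA_d GB_d)
  have C1: "\<phi> C1_differentiable_on UNIV" "deriv \<phi> x = alpha x + t * (beta x - alpha x)" for x
    by (rule C1_intro[OF d], intro continuous_intros alpha_cont beta_cont)+
  have cont: "continuous_on UNIV ?f" unfolding \<phi>_def by (intro continuous_intros GA_cont GB_cont u_cont)
  have sh: "?f (x + 1) = ?f x + (- (cA + t * (cB - cA)))" for x
    using GA_shift[of x] GB_shift[of x] u_per[of x] unfolding \<phi>_def by (simp add: algebra_simps)
  have nm: "\<not> (\<forall>y. \<bar>y - z\<bar> < e \<longrightarrow> ?f z \<le> ?f y)" if "e > 0" for z e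
  proof
    assume "\<forall>y. \<bar>y - z\<bar> < e \<longrightarrow> ?f z \<le> ?f y"
    then have "\<forall>y. \<bar>y - z\<bar> < e \<longrightarrow> u y - \<phi> y \<ge> u z - \<phi> z" by simp
    from super_test[OF C1(1) that this] have "Phi z (alpha z + t * (beta z - alpha z)) \<ge> 0" using C1(2) by simp
    moreover have "Phi z (alpha z + t * (beta z - alpha z)) < 0"
    proof (rule A2)
      have "0 < t * (beta z - alpha z)" "t * (beta z - alpha z) < 1 * (beta z - alpha z)"
        using nondeg_ab[of z] assms by (auto intro: mult_strict_right_mono)
      then show "alpha z < alpha z + t * (beta z - alpha z)" "alpha z + t * (beta z - alpha z) < beta z" by auto
    qed
    ultimately show False by simp
  qed
  have n0: "- (cA + t * (cB - cA)) \<noteq> 0" by (rule no_locmin_shift(1)[OF cont nm sh]) auto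
  then show "cA + t * (cB - cA) \<noteq> 0" by simp
  show "cA + t * (cB - cA) > 0 \<Longrightarrow> a < b \<Longrightarrow> u b - (GA b + t * (GB b - GA b)) < u a - (GA a + t * (GB a - GA a))"
    using no_locmin_shift(2)[OF cont nm sh, of a b] unfolding \<phi>_def by auto
  show "cA + t * (cB - cA) < 0 \<Longrightarrow> a < b \<Longrightarrow> u a - (GA a + t * (GB a - GA a)) < u b - (GA b + t * (GB b - GA b))"
    using no_locmin_shift(3)[OF cont nm sh, of a b] unfolding \<phi>_def by auto
qed

lemma branch: "(\<forall>a b. a < b \<longrightarrow> u b - u a = GA b - GA a) \<or> (\<forall>a b. a < b \<longrightarrow> u b - u a = GB b - GB a)"
proof -
  have A: "cA \<le> 0" "0 \<le> cB" using cA_nonpos cB_nonneg .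
  have not_both: "\<not> (cA = 0 \<and> cB = 0)" using S3_f(1)[of "1/2"] by auto
  have not_strict: "\<not> (cA < 0 \<and> 0 < cB)"
  proof
    assume h: "cA < 0 \<and> 0 < cB"
    define t where "t = - cA / (cB - cA)"
    have "0 < t" "t < 1" using h unfolding t_def by (auto simp: field_simps)
    moreover have "cA + t * (cB - cA) = 0" using h unfolding t_def by (simp add: field_simps)
    ultimately show False using S3_f(1) by blast
  qed
  consider "cA = 0 \<and> 0 < cB" | "cB = 0 \<and> cA < 0" using A not_both not_strict by linarith
  then show ?thesis
  proof cases
    case 1
    have "u b - u a = GA b - GA a" if "a < b" for a b
    proof -
      have "u b - u a \<le> GA b - GA a"
      proof (rule sq_limit[where C="(GB b - GB a) - (GA b - GA a)"])
        fix s :: real assume s: "0 < s" "s < 1"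
        have "cA + s * (cB - cA) > 0" using 1 s by simp
        from S3_f(2)[OF s this that]
        show "u b - u a < GA b - GA a + s * ((GB b - GB a) - (GA b - GA a))" by (simp add: algebra_simps)
      qed
      then show ?thesis using lower_bound[OF that] by simp
    qed
    then show ?thesis by blast
  next
    case 2
    have "u b - u a = GB b - GB a" if "a < b" for a b
    proof -
      have "GB b - GB a \<le> u b - u a"
      proof (rule sq_limit[where C="(GB b - GB a) - (GA b - GA a)"])
        fix s :: real assume s: "0 < s" "s < 1"
        have s1: "0 < 1 - s" "1 - s < 1" using s by auto
        have e: "cA + (1 - s) * (cB - cA) = s * cA" using 2 by (simp add: algebra_simps)
        have "s * cA < 0" using 2 s by (simp add: mult_pos_neg)
        then have "cA + (1 - s) * (cB - cA) < 0" using e by simp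
        from S3_f(3)[OF s1 this that]
        show "GB b - GB a < u b - u a + s * ((GB b - GB a) - (GA b - GA a))" by (simp add: algebra_simps)
      qed
      then show ?thesis using upper_bound[OF that] by simp
    qed
    then show ?thesis by blast
  qed
qed

lemma u_C1: "\<exists>g. continuous_on UNIV g \<and> (\<forall>x. (u has_real_derivative g x) (at x)) \<and> (\<forall>x. g (x + 1) = g x)"
proof -
  have gen: "\<exists>g. continuous_on UNIV g \<and> (\<forall>x. (u has_real_derivative g x) (at x)) \<and> (\<forall>x. g (x + 1) = g x)"
    if G: "\<forall>a b. a < b \<longrightarrow> u b - u a = G b - G a" and Gd: "\<And>x. (G has_real_derivative g x) (at x)"
      and gc: "continuous_on UNIV g" and gp: "\<And>x. g (x + 1) = g x" for G g
  proof -
    have ueq: "u x = u 0 + G x - G 0" for x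
    proof (cases x "0::real" rule: linorder_cases)
      case less then show ?thesis using G by force
    next
      case equal then show ?thesis by simp
    next
      case greater then show ?thesis using G by force
    qed
    have "((\<lambda>x. u 0 + G x - G 0) has_real_derivative g x) (at x)" for x
      by (auto intro!: derivative_eq_intros Gd)
    then have "(u has_real_derivative g x) (at x)" for x
      using ueq by (metis (no_types, lifting) ext)
    then show ?thesis using gc gp by blast
  qed
  from branch show ?thesis
  proof
    assume "\<forall>a b. a < b \<longrightarrow> u b - u a = GA b - GA a"
    then show ?thesis using gen GA_d alpha_cont alpha_per by blast
  next
    assume "\<forall>a b. a < b \<longrightarrow> u b - u a = GB b - GB a"
    then show ?thesis using gen GB_d beta_cont beta_per by blast
  qed
qed

end


lemma taylor1:
  fixes f f' f'' :: "real \<Rightarrow> real"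
  assumes d1: "\<And>q. (f has_real_derivative f' q) (at q)"
    and d2: "\<And>q. (f' has_real_derivative f'' q) (at q)"
    and bd: "\<And>q. min p (p+h) \<le> q \<Longrightarrow> q \<le> max p (p+h) \<Longrightarrow> \<bar>f'' q\<bar> \<le> M"
  shows "\<bar>f (p+h) - f p - f' p * h\<bar> \<le> M * h^2"
proof -
  have M0: "M \<ge> 0" using bd[of p] by (auto intro: order_trans[OF abs_ge_zero])
  have b1: "\<bar>f' q - f' p\<bar> \<le> M * \<bar>h\<bar>" if q: "min p (p+h) \<le> q" "q \<le> max p (p+h)" for q
  proof -
    have "\<bar>f' q - f' p\<bar> \<le> M * \<bar>q - p\<bar>"
      by (rule mvt_bound[OF d2]) (use q in \<open>auto intro!: bd\<close>)
    also have "\<dots> \<le> M * \<bar>h\<bar>" using q M0 by (intro mult_left_mono) auto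
    finally show ?thesis .
  qed
  have dF: "((\<lambda>q. f q - f' p * q) has_real_derivative f' q - f' p) (at q)" for q
    by (auto intro!: derivative_eq_intros d1)
  have "\<bar>(f (p+h) - f' p * (p+h)) - (f p - f' p * p)\<bar> \<le> (M * \<bar>h\<bar>) * \<bar>(p+h) - p\<bar>"
    by (rule mvt_bound[OF dF, where a=p and b="p+h"]) (use b1 in auto)
  then show ?thesis by (simp add: algebra_simps power2_eq_square abs_mult)
qed

lemma taylor2:
  fixes H :: "real \<Rightarrow> real \<Rightarrow> real \<Rightarrow> real" and g u :: "real \<Rightarrow> real"
  assumes Hs: "smooth3 H" and gc: "continuous_on {0..1} g" and uc: "continuous_on {0..1} u"
  shows "\<exists>L\<ge>0. \<forall>x\<in>{0..1}. \<forall>h k. \<bar>h\<bar> \<le> 1 \<longrightarrow> \<bar>k\<bar> \<le> 1 \<longrightarrow>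
    H x (g x + h) (u x + k) \<le> H x (g x) (u x) + Hp H x (g x) (u x) * h + Hu H x (g x) (u x) * k + L * (h^2 + k^2)"
proof -
  obtain Pm where Pm: "\<forall>x\<in>{0..1}. \<bar>g x\<bar> \<le> Pm" using int_bound[OF gc] by blast
  obtain Vm where Vm: "\<forall>x\<in>{0..1}. \<bar>u x\<bar> \<le> Vm" using int_bound[OF uc] by blast
  obtain M1 where M1: "\<forall>x p v. x \<in> {0..1} \<longrightarrow> p \<in> {-Pm-2..Pm+2} \<longrightarrow> v \<in> {-Vm-2..Vm+2} \<longrightarrow> \<bar>Hp (Hp H) x p v\<bar> \<le> M1"
    using box_bound[OF smooth3_facts(4)[OF Hs]] by blast
  obtain M2 where M2: "\<forall>x p v. x \<in> {0..1} \<longrightarrow> p \<in> {-Pm-2..Pm+2} \<longrightarrow> v \<in> {-Vm-2..Vm+2} \<longrightarrow> \<bar>Hu (Hp H) x p v\<bar> \<le> M2"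
    using box_bound[OF smooth3_facts(5)[OF Hs]] by blast
  obtain M3 where M3: "\<forall>x p v. x \<in> {0..1} \<longrightarrow> p \<in> {-Pm-2..Pm+2} \<longrightarrow> v \<in> {-Vm-2..Vm+2} \<longrightarrow> \<bar>Hu (Hu H) x p v\<bar> \<le> M3"
    using box_bound[OF smooth3_facts(6)[OF Hs]] by blast
  have Pm0: "Pm \<ge> 0" using Pm by (force intro: order_trans[OF abs_ge_zero])
  have Vm0: "Vm \<ge> 0" using Vm by (force intro: order_trans[OF abs_ge_zero])
  have M1p: "M1 \<ge> 0" using M1[rule_format, of 0 0 0] Pm0 Vm0 by (auto intro: order_trans[OF abs_ge_zero])
  have M2p: "M2 \<ge> 0" using M2[rule_format, of 0 0 0] Pm0 Vm0 by (auto intro: order_trans[OF abs_ge_zero])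
  have M3p: "M3 \<ge> 0" using M3[rule_format, of 0 0 0] Pm0 Vm0 by (auto intro: order_trans[OF abs_ge_zero])
  have main: "H x (g x + h) (u x + k) \<le> H x (g x) (u x) + Hp H x (g x) (u x) * h + Hu H x (g x) (u x) * k + (M1+M2+M3) * (h^2 + k^2)"
    if x: "x \<in> {0..1}" and h: "\<bar>h\<bar> \<le> 1" and k: "\<bar>k\<bar> \<le> 1" for x h k
  proof -
    define p where "p = g x"
    define v where "v = u x"
    have pb: "\<bar>p\<bar> \<le> Pm" and vb: "\<bar>v\<bar> \<le> Vm" using Pm Vm x unfolding p_def v_def by auto
    have E1: "\<bar>H x (p+h) (v+k) - H x p (v+k) - Hp H x p (v+k) * h\<bar> \<le> M1 * h^2"
    proof (rule taylor1[where f="\<lambda>q. H x q (v+k)" and f'="\<lambda>q. Hp H x q (v+k)" and f''="\<lambda>q. Hp (Hp H) x q (v+k)"])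
      show "\<And>q. ((\<lambda>q. H x q (v + k)) has_real_derivative Hp H x q (v + k)) (at q)" by (rule smooth3_facts(7)[OF Hs])
      show "\<And>q. ((\<lambda>q. Hp H x q (v + k)) has_real_derivative Hp (Hp H) x q (v + k)) (at q)" by (rule smooth3_facts(9)[OF Hs])
      fix q assume "min p (p + h) \<le> q" "q \<le> max p (p + h)"
      then have "q \<in> {-Pm-2..Pm+2}" "v + k \<in> {-Vm-2..Vm+2}" using pb vb h k by (auto simp: abs_le_iff)
      then show "\<bar>Hp (Hp H) x q (v + k)\<bar> \<le> M1" using M1 x by blast
    qed
    have E2: "\<bar>H x p (v+k) - H x p v - Hu H x p v * k\<bar> \<le> M3 * k^2"
    proof (rule taylor1[where f="\<lambda>q. H x p q" and f'="\<lambda>q. Hu H x p q" and f''="\<lambda>q. Hu (Hu H) x p q"])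
      show "\<And>q. ((\<lambda>q. H x p q) has_real_derivative Hu H x p q) (at q)" by (rule smooth3_facts(8)[OF Hs])
      show "\<And>q. ((\<lambda>q. Hu H x p q) has_real_derivative Hu (Hu H) x p q) (at q)" by (rule smooth3_facts(11)[OF Hs])
      fix q assume "min v (v + k) \<le> q" "q \<le> max v (v + k)"
      then have "p \<in> {-Pm-2..Pm+2}" "q \<in> {-Vm-2..Vm+2}" using pb vb h k by (auto simp: abs_le_iff)
      then show "\<bar>Hu (Hu H) x p q\<bar> \<le> M3" using M3 x by blast
    qed
    have E3: "\<bar>Hp H x p (v+k) - Hp H x p v\<bar> \<le> M2 * \<bar>(v+k) - v\<bar>"
    proof (rule mvt_bound[where f="\<lambda>q. Hp H x p q" and f'="\<lambda>q. Hu (Hp H) x p q"])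
      show "\<And>q. ((\<lambda>q. Hp H x p q) has_real_derivative Hu (Hp H) x p q) (at q)" by (rule smooth3_facts(10)[OF Hs])
      fix q assume "min v (v + k) \<le> q" "q \<le> max v (v + k)"
      then have "p \<in> {-Pm-2..Pm+2}" "q \<in> {-Vm-2..Vm+2}" using pb vb h k by (auto simp: abs_le_iff)
      then show "\<bar>Hu (Hp H) x p q\<bar> \<le> M2" using M2 x by blast
    qed
    have E3': "\<bar>(Hp H x p (v+k) - Hp H x p v) * h\<bar> \<le> M2 * (h^2 + k^2)"
    proof -
      have "\<bar>(Hp H x p (v+k) - Hp H x p v) * h\<bar> \<le> (M2 * \<bar>k\<bar>) * \<bar>h\<bar>"
        using E3 by (simp add: abs_mult mult_right_mono)
      also have "\<dots> \<le> M2 * (h^2 + k^2)"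
      proof -
        have "0 \<le> (\<bar>h\<bar> - \<bar>k\<bar>)^2" by simp
        then have "2 * (\<bar>k\<bar> * \<bar>h\<bar>) \<le> \<bar>h\<bar>^2 + \<bar>k\<bar>^2" by (simp add: power2_diff algebra_simps)
        moreover have "0 \<le> \<bar>k\<bar> * \<bar>h\<bar>" by simp
        ultimately have "\<bar>k\<bar> * \<bar>h\<bar> \<le> h^2 + k^2" by (simp only: power2_abs)
        then show ?thesis using M2p by (simp add: mult.assoc mult_left_mono)
      qed
      finally show ?thesis .
    qed
    have "H x (p+h) (v+k) - H x p v - Hp H x p v * h - Hu H x p v * k
        = (H x (p+h) (v+k) - H x p (v+k) - Hp H x p (v+k) * h) + (H x p (v+k) - H x p v - Hu H x p v * k)
          + (Hp H x p (v+k) - Hp H x p v) * h" by (simp add: algebra_simps)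
    also have "\<dots> \<le> M1 * h^2 + M3 * k^2 + M2 * (h^2 + k^2)" using E1 E2 E3' by linarith
    also have "\<dots> \<le> (M1+M2+M3) * (h^2 + k^2)" using M1p M3p by (simp add: algebra_simps)
    finally show ?thesis unfolding p_def v_def by simp
  qed
  show ?thesis using M1p M2p M3p main by (intro exI[of _ "M1+M2+M3"]) auto
qed



lemma alg_bound:
  fixes R K Ii ww s c :: real
  assumes sc: "s^2 + c^2 = 1"
  shows "(R*K*(1+s) + R*c*ww*Ii)^2 + (R*(1+s))^2 \<le> (1+s) * (4*R^2*K^2 + 4*R^2*ww^2*Ii^2 + 2*R^2)"
proof -
  define P where "P = R*K"
  define Q where "Q = R*ww*Ii"
  have s1: "-1 \<le> s" "s \<le> 1"
  proof -
    have "s^2 \<le> 1" using sc by (smt (verit) zero_le_power2)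
    then show "-1 \<le> s" "s \<le> 1" using abs_le_square_iff[of s 1] by auto
  qed
  have sq1: "(1+s)^2 \<le> 2*(1+s)"
  proof -
    have "(1+s)^2 = (1+s)*(1+s)" by (simp add: power2_eq_square)
    also have "\<dots> \<le> 2*(1+s)" using s1 by (intro mult_right_mono) auto
    finally show ?thesis .
  qed
  have c2: "c^2 \<le> 2*(1+s)"
  proof -
    have "c^2 = (1-s)*(1+s)" using sc by (simp add: algebra_simps power2_eq_square)
    also have "\<dots> \<le> 2*(1+s)" using s1 by (intro mult_right_mono) auto
    finally show ?thesis .
  qed
  have a2: "(P*(1+s) + Q*c)^2 \<le> 2*(P^2*(1+s)^2) + 2*(Q^2*c^2)"
  proof -
    have "0 \<le> (P*(1+s) - Q*c)^2" by simp
    then show ?thesis by (simp add: power2_eq_square algebra_simps)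
  qed
  have "P^2*(1+s)^2 \<le> P^2*(2*(1+s))" using sq1 by (intro mult_left_mono) auto
  moreover have "Q^2*c^2 \<le> Q^2*(2*(1+s))" using c2 by (intro mult_left_mono) auto
  moreover have "R^2*(1+s)^2 \<le> R^2*(2*(1+s))" using sq1 by (intro mult_left_mono) auto
  moreover have "(R*(1+s))^2 = R^2*(1+s)^2" by (simp add: power_mult_distrib)
  moreover have "(1+s)*(4*P^2+4*Q^2+2*R^2) = 2*(P^2*(2*(1+s))) + 2*(Q^2*(2*(1+s))) + R^2*(2*(1+s))"
    by (simp add: algebra_simps)
  ultimately have "(P*(1+s) + Q*c)^2 + (R*(1+s))^2 \<le> (1+s) * (4*P^2 + 4*Q^2 + 2*R^2)"
    using a2 by linarith
  moreover have "R*K*(1+s) + R*c*ww*Ii = P*(1+s) + Q*c" unfolding P_def Q_def by (simp add: algebra_simps)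
  moreover have "4*P^2 + 4*Q^2 + 2*R^2 = 4*R^2*K^2 + 4*R^2*ww^2*Ii^2 + 2*R^2"
    unfolding P_def Q_def by (simp add: power_mult_distrib)
  ultimately show ?thesis by simp
qed



context visc begin

lemma final:
  assumes mu_neg: "muC H u < 0"
  shows "\<exists>\<epsilon>1>0. \<forall>\<epsilon>. 0 < \<epsilon> \<and> \<epsilon> \<le> \<epsilon>1 \<longrightarrow>
           (\<forall>x\<in>{0..1}. \<forall>t\<ge>0.
              wF H u x0 \<epsilon> x (t + TC H u) = wF H u x0 \<epsilon> x t \<and>
              deriv (\<lambda>s. wF H u x0 \<epsilon> x s) t
                + H x (deriv (\<lambda>y. wF H u x0 \<epsilon> y t) x) (wF H u x0 \<epsilon> x t) \<le> 0)"
proof -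
  obtain g where gc: "continuous_on UNIV g" and gd: "\<And>x. (u has_real_derivative g x) (at x)"
    using u_C1 by blast
  have du: "deriv u = g" using gd DERIV_imp_deriv by (intro ext) blast
  have uC1: "u C1_differentiable_on UNIV" using C1_intro[OF gd gc] by blast
  have triv1: "\<forall>y. \<bar>y - x\<bar> < 1 \<longrightarrow> u y - u y \<le> u x - u x" for x by simp
  have triv2: "\<forall>y. \<bar>y - x\<bar> < 1 \<longrightarrow> u y - u y \<ge> u x - u x" for x by simp
  have Hz: "H x (g x) (u x) = 0" for x
    using sub_test[OF uC1 _ triv1, of x] super_test[OF uC1 _ triv2, of x] unfolding Phi_def du by auto
  define B where "B = Bf H u"
  have Beq: "B x = Hp H x (g x) (u x)" for x by (simp add: B_def Bf_def du)
  have Bnz: "B x \<noteq> 0" for x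
    using u_nondeg[of x] gd unfolding Beq du real_differentiable_def by blast
  have Bc: "continuous_on UNIV B"
  proof -
    have "continuous_on UNIV (\<lambda>x. Hp H x (g x) (u x))"
      by (rule cont3[OF smooth3_facts(2)[OF H_smooth] continuous_on_id gc u_cont])
    then show ?thesis using Beq by (metis (no_types, lifting) ext)
  qed
  define hu where "hu x = Hu H x (g x) (u x)" for x
  have huc: "continuous_on UNIV hu"
    unfolding hu_def by (rule cont3[OF smooth3_facts(3)[OF H_smooth] continuous_on_id gc u_cont])
  define mu where "mu = muC H u"
  define kk where "kk = (\<lambda>\<tau>. (muC H u - Hu H \<tau> (deriv u \<tau>) (u \<tau>)) / Bf H u \<tau>)"
  have kk_eq: "kk x = (mu - hu x) / B x" for x unfolding kk_def mu_def hu_def B_def du by simp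
  have kkc: "continuous_on UNIV kk"
  proof -
    have "continuous_on UNIV (\<lambda>x. (mu - hu x) / B x)"
      using Bnz by (intro continuous_intros huc Bc) auto
    then show ?thesis using kk_eq by (metis (no_types, lifting) ext)
  qed
  define ib where "ib = (\<lambda>\<tau>. - (1 / Bf H u \<tau>))"
  have ib_eq: "ib x = - (1 / B x)" for x unfolding ib_def B_def by simp
  have ibc: "continuous_on UNIV ib"
  proof -
    have "continuous_on UNIV (\<lambda>x. - (1 / B x))"
      using Bnz by (intro continuous_intros Bc) auto
    then show ?thesis using ib_eq by (metis (no_types, lifting) ext)
  qed
  define Z where "Z = ZC H u"
  define ww where "ww = 2 * pi / Z"
  define rho where "rho x = exp (oint 0 x kk)" for x
  have rho_eq: "rhoF H u x = rho x" for x unfolding rhoF_def rho_def kk_def ..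
  define ff where "ff x = ww * oint 0 x ib" for x
  have ff_eq: "fF H u x = ff x" for x unfolding fF_def ff_def ww_def Z_def ib_def ..
  have rho_d: "(rho has_real_derivative rho x * kk x) (at x)" for x
    unfolding rho_def[abs_def] by (rule DERIV_fun_exp[OF oint_deriv[OF kkc]])
  have ff_d: "(ff has_real_derivative ww * ib x) (at x)" for x
    unfolding ff_def[abs_def] by (rule DERIV_cmult[OF oint_deriv[OF ibc]])
  have rhoc: "continuous_on UNIV rho"
    using rho_d DERIV_isCont continuous_at_imp_continuous_on by blast
  have rho_pos: "rho x > 0" for x unfolding rho_def by simp
  have wF_eq: "wF H u x0 \<epsilon> x t = u x + \<epsilon> * rho x + \<epsilon> * rho x * sin (- pi / 2 + ff x - ff x0 + ww * t)" for \<epsilon> x t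
    unfolding wF_def rho_eq ff_eq ww_def Z_def ..
  define th where "th x t = - pi / 2 + ff x - ff x0 + ww * t" for x t
  have dt: "deriv (\<lambda>s. wF H u x0 \<epsilon> x s) t = \<epsilon> * rho x * (cos (th x t) * ww)" for \<epsilon> x t
  proof -
    have "((\<lambda>s. u x + \<epsilon> * rho x + \<epsilon> * rho x * sin (- pi / 2 + ff x - ff x0 + ww * s)) has_real_derivative
           \<epsilon> * rho x * (cos (th x t) * ww)) (at t)"
      unfolding th_def by (auto intro!: derivative_eq_intros)
    then show ?thesis unfolding wF_eq by (rule DERIV_imp_deriv)
  qed
  have dx: "deriv (\<lambda>y. wF H u x0 \<epsilon> y t) x =
      g x + \<epsilon> * (rho x * kk x) + \<epsilon> * ((rho x * kk x) * sin (th x t) + rho x * (cos (th x t) * (ww * ib x)))" for \<epsilon> x t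
  proof -
    have "((\<lambda>y. u y + \<epsilon> * rho y + \<epsilon> * rho y * sin (- pi / 2 + ff y - ff x0 + ww * t)) has_real_derivative
       g x + \<epsilon> * (rho x * kk x) + \<epsilon> * ((rho x * kk x) * sin (th x t) + rho x * (cos (th x t) * (ww * ib x)))) (at x)"
      unfolding th_def by (auto intro!: derivative_eq_intros gd rho_d ff_d) (simp add: algebra_simps)
    then show ?thesis unfolding wF_eq by (rule DERIV_imp_deriv)
  qed

  obtain xm where xm: "xm \<in> {0..1}" "\<And>y. y \<in> {0..1} \<Longrightarrow> rho xm \<le> rho y"
    using continuous_attains_inf[OF compact_Icc _ continuous_on_subset[OF rhoc subset_UNIV], of 0 1] by auto
  define Rmin where "Rmin = rho xm"
  have Rmin: "Rmin > 0" "\<And>y. y \<in> {0..1} \<Longrightarrow> Rmin \<le> rho y" unfolding Rmin_def using rho_pos xm by auto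
  define Aq where "Aq x = 4*(rho x)^2*(kk x)^2 + 4*(rho x)^2*ww^2*(ib x)^2 + 2*(rho x)^2" for x
  have Aqc: "continuous_on {0..1} Aq"
  proof -
    have "continuous_on UNIV Aq" unfolding Aq_def by (intro continuous_intros rhoc kkc ibc)
    then show ?thesis by (rule continuous_on_subset) simp
  qed
  obtain Ab0 where Ab0: "\<forall>x\<in>{0..1}. \<bar>Aq x\<bar> \<le> Ab0" using int_bound[OF Aqc] by blast
  define Ab where "Ab = max Ab0 0"
  have Ab: "Ab \<ge> 0" "\<And>x. x \<in> {0..1} \<Longrightarrow> Aq x \<le> Ab" unfolding Ab_def using Ab0 by force+
  obtain L where L: "L \<ge> 0" "\<forall>x\<in>{0..1}. \<forall>h k. \<bar>h\<bar> \<le> 1 \<longrightarrow> \<bar>k\<bar> \<le> 1 \<longrightarrow>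
    H x (g x + h) (u x + k) \<le> H x (g x) (u x) + Hp H x (g x) (u x) * h + Hu H x (g x) (u x) * k + L * (h^2 + k^2)"
    using taylor2[OF H_smooth continuous_on_subset[OF gc subset_UNIV] continuous_on_subset[OF u_cont subset_UNIV]] by blast
  have mu: "mu < 0" using mu_neg unfolding mu_def .
  define \<epsilon>1 where "\<epsilon>1 = min (1/(1+2*Ab)) (-mu*Rmin/((L+1)*(Ab+1)))"
  have e1: "\<epsilon>1 > 0"
  proof -
    have p1: "-mu*Rmin > 0" using mu Rmin(1) by (simp add: mult_neg_pos)
    have p2: "(L+1)*(Ab+1) > 0" using L Ab by simp
    have "-mu*Rmin/((L+1)*(Ab+1)) > 0" using p1 p2 by (rule divide_pos_pos)
    moreover have "1/(1+2*Ab) > 0" using Ab by simp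
    ultimately show ?thesis unfolding \<epsilon>1_def by simp
  qed
  have absq: "\<bar>z\<bar> \<le> 1 + z^2" for z :: real
  proof -
    have "0 \<le> (\<bar>z\<bar> - 1)^2" by simp
    then have "2 * \<bar>z\<bar> \<le> z^2 + 1" by (simp add: power2_diff)
    moreover have "0 \<le> z^2" by simp
    ultimately show ?thesis by linarith
  qed
  show ?thesis
  proof (rule exI[of _ \<epsilon>1], intro conjI allI impI ballI)
    show "\<epsilon>1 > 0" by (rule e1)
    fix \<epsilon> x t :: real assume e: "0 < \<epsilon> \<and> \<epsilon> \<le> \<epsilon>1" and x: "x \<in> {0..1}" and t: "0 \<le> t"
    have TC: "TC H u = \<bar>Z\<bar>" unfolding TC_def Z_def ..
    have per: "sin (y + ww * \<bar>Z\<bar>) = sin y" for y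
    proof (cases Z "0::real" rule: linorder_cases)
      case less
      then have "ww * \<bar>Z\<bar> = - (2 * pi)" unfolding ww_def by simp
      then show ?thesis using sin_periodic[of "y - 2 * pi"] by simp
    next
      case equal then show ?thesis unfolding ww_def by simp
    next
      case greater
      then have "ww * \<bar>Z\<bar> = 2 * pi" unfolding ww_def by simp
      then show ?thesis using sin_periodic[of y] by simp
    qed
    show "wF H u x0 \<epsilon> x (t + TC H u) = wF H u x0 \<epsilon> x t"
    proof -
      have "- pi / 2 + ff x - ff x0 + ww * (t + \<bar>Z\<bar>) = (- pi / 2 + ff x - ff x0 + ww * t) + ww * \<bar>Z\<bar>"
        by (simp add: algebra_simps)
      then have "sin (- pi / 2 + ff x - ff x0 + ww * (t + \<bar>Z\<bar>)) = sin ((- pi / 2 + ff x - ff x0 + ww * t) + ww * \<bar>Z\<bar>)"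
        by (rule arg_cong)
      also have "\<dots> = sin (- pi / 2 + ff x - ff x0 + ww * t)" by (rule per)
      finally have "sin (- pi / 2 + ff x - ff x0 + ww * (t + \<bar>Z\<bar>)) = sin (- pi / 2 + ff x - ff x0 + ww * t)" .
      then show ?thesis unfolding wF_eq TC by simp
    qed
    define sn where "sn = sin (th x t)"
    define cs where "cs = cos (th x t)"
    define R where "R = rho x"
    define K where "K = kk x"
    define Ii where "Ii = ib x"
    define a where "a = R*K*(1+sn) + R*cs*ww*Ii"
    define b where "b = R*(1+sn)"
    have wx: "deriv (\<lambda>y. wF H u x0 \<epsilon> y t) x = g x + \<epsilon> * a"
      unfolding dx a_def R_def K_def Ii_def sn_def cs_def by (simp add: algebra_simps)
    have wv: "wF H u x0 \<epsilon> x t = u x + \<epsilon> * b"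
      unfolding wF_eq b_def R_def sn_def th_def by (simp add: algebra_simps)
    have wt: "deriv (\<lambda>s. wF H u x0 \<epsilon> x s) t = \<epsilon> * R * cs * ww"
      unfolding dt R_def cs_def by (simp add: algebra_simps)
    have sc: "sn^2 + cs^2 = 1" unfolding sn_def cs_def by simp
    have s1: "0 \<le> 1 + sn" "1 + sn \<le> 2" unfolding sn_def using sin_ge_minus_one[of "th x t"] sin_le_one[of "th x t"] by linarith+
    have ab: "a^2 + b^2 \<le> (1+sn) * Aq x"
      using alg_bound[OF sc, of R K ww Ii] unfolding a_def b_def Aq_def R_def K_def Ii_def by simp
    have ab1: "(1+sn) * Aq x \<le> (1+sn) * Ab" using Ab(2)[OF x] s1 by (intro mult_left_mono) auto
    have ab2: "(1+sn) * Ab \<le> 2 * Ab" using s1 Ab by (intro mult_right_mono) auto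
    have eAb: "\<epsilon> * (1 + 2*Ab) \<le> 1"
    proof -
      have "\<epsilon> \<le> 1/(1+2*Ab)" using e unfolding \<epsilon>1_def by simp
      then show ?thesis using Ab by (simp add: field_simps)
    qed
    have ea: "\<bar>\<epsilon> * a\<bar> \<le> 1"
    proof -
      have "\<bar>a\<bar> \<le> 1 + 2*Ab" using absq[of a] ab ab1 ab2 zero_le_power2[of b] by linarith
      then have h1: "\<epsilon> * \<bar>a\<bar> \<le> \<epsilon> * (1 + 2*Ab)" using e by (intro mult_left_mono) auto
      have "\<bar>\<epsilon> * a\<bar> = \<epsilon> * \<bar>a\<bar>" using e by (simp add: abs_mult)
      then show ?thesis using h1 eAb by linarith
    qed
    have eb: "\<bar>\<epsilon> * b\<bar> \<le> 1"
    proof -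
      have "\<bar>b\<bar> \<le> 1 + 2*Ab" using absq[of b] ab ab1 ab2 zero_le_power2[of a] by linarith
      then have h1: "\<epsilon> * \<bar>b\<bar> \<le> \<epsilon> * (1 + 2*Ab)" using e by (intro mult_left_mono) auto
      have "\<bar>\<epsilon> * b\<bar> = \<epsilon> * \<bar>b\<bar>" using e by (simp add: abs_mult)
      then show ?thesis using h1 eAb by linarith
    qed
    have tay: "H x (g x + \<epsilon> * a) (u x + \<epsilon> * b) \<le> B x * (\<epsilon> * a) + hu x * (\<epsilon> * b) + L * ((\<epsilon> * a)^2 + (\<epsilon> * b)^2)"
      using L(2) x ea eb Hz[of x] unfolding Beq hu_def by fastforce
    have BK: "B x * K = mu - hu x" unfolding K_def kk_eq using Bnz[of x] by simp
    have BI: "B x * Ii = -1" unfolding Ii_def ib_eq using Bnz[of x] by simp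
    have lin: "B x * (\<epsilon> * a) + hu x * (\<epsilon> * b) = \<epsilon> * mu * R * (1+sn) - \<epsilon> * R * cs * ww"
    proof -
      have "B x * (\<epsilon> * a) = \<epsilon> * (R * (B x * K) * (1+sn) + R * cs * ww * (B x * Ii))"
        unfolding a_def by (simp add: algebra_simps)
      then show ?thesis unfolding BK BI b_def by (simp add: algebra_simps)
    qed
    have sq: "L * ((\<epsilon> * a)^2 + (\<epsilon> * b)^2) \<le> L * \<epsilon>^2 * ((1+sn) * Ab)"
    proof -
      have "(\<epsilon> * a)^2 + (\<epsilon> * b)^2 = \<epsilon>^2 * (a^2 + b^2)" by (simp add: power_mult_distrib algebra_simps)
      also have "\<dots> \<le> \<epsilon>^2 * ((1+sn) * Ab)" using ab ab1 by (intro mult_left_mono) auto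
      finally show ?thesis using L(1) by (simp add: mult.assoc mult_left_mono)
    qed
    have total: "deriv (\<lambda>s. wF H u x0 \<epsilon> x s) t + H x (deriv (\<lambda>y. wF H u x0 \<epsilon> y t) x) (wF H u x0 \<epsilon> x t)
        \<le> \<epsilon> * (1+sn) * (mu * R + L * \<epsilon> * Ab)"
    proof -
      have "deriv (\<lambda>s. wF H u x0 \<epsilon> x s) t + H x (deriv (\<lambda>y. wF H u x0 \<epsilon> y t) x) (wF H u x0 \<epsilon> x t)
          = \<epsilon> * R * cs * ww + H x (g x + \<epsilon> * a) (u x + \<epsilon> * b)" unfolding wt wx wv ..
      also have "\<dots> \<le> \<epsilon> * mu * R * (1+sn) + L * \<epsilon>^2 * ((1+sn) * Ab)" using tay lin sq by linarith
      also have "\<dots> = \<epsilon> * (1+sn) * (mu * R + L * \<epsilon> * Ab)" by (simp add: algebra_simps power2_eq_square)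
      finally show ?thesis .
    qed
    have neg: "mu * R + L * \<epsilon> * Ab \<le> 0"
    proof -
      have "mu * R \<le> mu * Rmin" using Rmin(2)[OF x] mu unfolding R_def by (intro mult_left_mono_neg) auto
      moreover have "L * \<epsilon> * Ab \<le> - mu * Rmin"
      proof -
        have eb2: "\<epsilon> \<le> -mu*Rmin/((L+1)*(Ab+1))" using e unfolding \<epsilon>1_def by simp
        have pos: "(L+1)*(Ab+1) > 0" using L Ab by simp
        have "L * Ab \<le> (L+1)*(Ab+1)" using L Ab by (simp add: algebra_simps)
        then have "L * Ab * \<epsilon> \<le> (L+1)*(Ab+1) * \<epsilon>" using e by (intro mult_right_mono) auto
        also have "\<dots> \<le> (L+1)*(Ab+1) * (-mu*Rmin/((L+1)*(Ab+1)))" using eb2 pos by (intro mult_left_mono) auto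
        also have "\<dots> = -mu*Rmin" using pos L(1) Ab(1) by simp
        finally show ?thesis by (simp add: algebra_simps)
      qed
      ultimately show ?thesis by linarith
    qed
    have "\<epsilon> * (1+sn) \<ge> 0" using e s1 by simp
    then have "\<epsilon> * (1+sn) * (mu * R + L * \<epsilon> * Ab) \<le> 0" using neg by (simp add: mult_nonneg_nonpos)
    then show "deriv (\<lambda>s. wF H u x0 \<epsilon> x s) t + H x (deriv (\<lambda>y. wF H u x0 \<epsilon> y t) x) (wF H u x0 \<epsilon> x t) \<le> 0"
      using total by linarith
  qed
qed

end

theorem lemma4p1:
  fixes H :: "real \<Rightarrow> real \<Rightarrow> real \<Rightarrow> real" and u0 :: "real \<Rightarrow> real"
    and \<kappa> :: real and x0 :: real
  assumes H_smooth: "smooth3 H"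
    and H_per: "\<And>x p u. H (x + 1) p u = H x p u"
    and H_conv: "\<And>x p u. deriv (\<lambda>q. Hp H x q u) p > 0"
    and H_superlin: "\<And>x u. filterlim (\<lambda>p. H x p u / \<bar>p\<bar>) at_top at_infinity"
    and kappa_pos: "\<kappa> > 0"
    and H_lip: "\<And>x p u. \<bar>Hu H x p u\<bar> \<le> \<kappa>"
    and u0_per: "\<And>x. u0 (x + 1) = u0 x"
    and u0_visc: "viscosity_solution H u0"
    and u0_nondeg: "\<And>x. u0 differentiable (at x) \<Longrightarrow> Hp H x (deriv u0 x) (u0 x) \<noteq> 0"
    and mu_neg: "muC H u0 < 0"
    and x0_in: "x0 \<in> {0..1}"
  shows "\<exists>\<epsilon>1>0. \<forall>\<epsilon>. 0 < \<epsilon> \<and> \<epsilon> \<le> \<epsilon>1 \<longrightarrow>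
           (\<forall>x\<in>{0..1}. \<forall>t\<ge>0.
              wF H u0 x0 \<epsilon> x (t + TC H u0) = wF H u0 x0 \<epsilon> x t \<and>
              deriv (\<lambda>s. wF H u0 x0 \<epsilon> x s) t
                + H x (deriv (\<lambda>y. wF H u0 x0 \<epsilon> y t) x) (wF H u0 x0 \<epsilon> x t) \<le> 0)"
  proof -
  interpret visc H u0
  proof
    fix x assume "u0 differentiable at x"
    then show "Hp H x (deriv u0 x) (u0 x) \<noteq> 0" by (rule u0_nondeg)
  qed (rule H_smooth H_per H_conv H_superlin u0_per u0_visc)+
  show ?thesis by (rule final[OF mu_neg])
qed

end
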